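(* Let $t\ge1$ be an integer, let $f_t(x)=\sum_{n\ge0}c_n^{(t)}x^n$ where $c^{(t)}_n$ is the number of permutations of $\{1,\dots,n\}$ in $\mathcal F(1,t)$, and let $g_t=xf_t$. Then $$f_t=1+xf_t+(f_t-1)\sum_{u=1}^{t}x^uf_t^u,$$ and equivalently $$g_t^{t+1}+(1-x)\left(g_t^t+g_t^{t-1}+\cdots+g_t^2\right)-g_t+x=0,$$ so that also $x\left(-g_t^{t+1}+g_t^2+g_t-1\right)+\left(g_t^{t+2}-2g_t^2+g_t\right)=0$.
   Context: Forkstack sorting with capacities $s,t\in\{1,2,3,\dots\}\cup\{\infty\}$: a permutation $\pi=\pi_1\cdots\pi_n$ of $\{1,\dots,n\}$ is placed on an input stack with $\pi_1$ on top; a working stack and an output stack are initially empty. A move either (i) removes the top $k$ elements of the input stack ($1\le k\le s$) and places them as a block, relative order unchanged, on top of the working stack, or (ii) removes the top $l$ elements of the working stack ($1\le l\le t$) and places them as a block, relative order unchanged, on top of the output stack. $\pi$ is sortable if some sequence of moves ends with input and working stacks empty and the output stack reading $1,2,\dots,n$ from top to bottom. $\mathcal F(s,t)$ is the set of sortable permutations; the empty permutation counts as sortable. *)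

theory Defs
  imports "HOL-Computational_Algebra.Formal_Power_Series" "HOL-Library.Extended_Nat"
    "HOL-Combinatorics.Multiset_Permutations"
begin

text \<open>Configurations (input, working, output); each stack is a list with the top element first.
Capacities are extended naturals (infinity allowed).\<close>

type_synonym fs_config = "nat list \<times> nat list \<times> nat list"

definition fs_step :: "enat \<Rightarrow> enat \<Rightarrow> fs_config \<Rightarrow> fs_config \<Rightarrow> bool" where
  "fs_step s t c c' \<longleftrightarrow>
     (\<exists>inp w out. c = (inp, w, out) \<and>
        ((\<exists>k. 1 \<le> k \<and> enat k \<le> s \<and> k \<le> length inp \<and>
              c' = (drop k inp, take k inp @ w, out)) \<or>
         (\<exists>l. 1 \<le> l \<and> enat l \<le> t \<and> l \<le> length w \<and>
              c' = (inp, drop l w, take l w @ out))))"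

definition fs_sortable :: "enat \<Rightarrow> enat \<Rightarrow> nat list \<Rightarrow> bool" where
  "fs_sortable s t \<pi> \<longleftrightarrow> (fs_step s t)\<^sup>*\<^sup>* (\<pi>, [], []) ([], [], [1..<length \<pi> + 1])"

definition forkstack_class :: "enat \<Rightarrow> enat \<Rightarrow> nat list set" ("\<F>") where
  "\<F> s t = {\<pi>. fs_sortable s t \<pi>}"

definition c_count :: "nat \<Rightarrow> nat \<Rightarrow> nat" where
  "c_count t n = card {\<pi> \<in> permutations_of_set {1..n}. \<pi> \<in> \<F> 1 (enat t)}"

definition f_gf :: "nat \<Rightarrow> int fps" where
  "f_gf t = Abs_fps (\<lambda>n. int (c_count t n))"

end

theory Submission
  imports Defs
begin

abbreviation rch :: "enat \<Rightarrow> fs_config \<Rightarrow> fs_config \<Rightarrow> bool" where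
  "rch T \<equiv> (fs_step 1 T)\<^sup>*\<^sup>*"

lemma step_iff:
  "fs_step 1 T (i, w, ot) c' \<longleftrightarrow>
    (i \<noteq> [] \<and> c' = (tl i, hd i # w, ot)) \<or>
    (\<exists>l. 1 \<le> l \<and> enat l \<le> T \<and> l \<le> length w \<and> c' = (i, drop l w, take l w @ ot))"
proof
  assume "fs_step 1 T (i, w, ot) c'"
  then show "(i \<noteq> [] \<and> c' = (tl i, hd i # w, ot)) \<or>
    (\<exists>l. 1 \<le> l \<and> enat l \<le> T \<and> l \<le> length w \<and> c' = (i, drop l w, take l w @ ot))"
    unfolding fs_step_def
  proof (elim exE conjE disjE)
    fix inp w' out k assume h: "(i, w, ot) = (inp, w', out)" "1 \<le> k" "enat k \<le> 1" "k \<le> length inp"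
      "c' = (drop k inp, take k inp @ w', out)"
    then have "k = 1" by (simp add: one_enat_def)
    with h show ?thesis by (cases i) auto
  next
    fix inp w' out l assume h: "(i, w, ot) = (inp, w', out)" "1 \<le> l" "enat l \<le> T" "l \<le> length w'"
      "c' = (inp, drop l w', take l w' @ out)"
    then show ?thesis by auto
  qed
next
  assume "(i \<noteq> [] \<and> c' = (tl i, hd i # w, ot)) \<or>
    (\<exists>l. 1 \<le> l \<and> enat l \<le> T \<and> l \<le> length w \<and> c' = (i, drop l w, take l w @ ot))"
  then show "fs_step 1 T (i, w, ot) c'"
    unfolding fs_step_def
  proof (elim disjE exE conjE)
    assume "i \<noteq> []" "c' = (tl i, hd i # w, ot)"
    then show "\<exists>inp w' out. (i, w, ot) = (inp, w', out) \<and>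
        ((\<exists>k\<ge>1. enat k \<le> 1 \<and> k \<le> length inp \<and> c' = (drop k inp, take k inp @ w', out)) \<or>
         (\<exists>l\<ge>1. enat l \<le> T \<and> l \<le> length w' \<and> c' = (inp, drop l w', take l w' @ out)))"
      by (cases i) (auto intro!: exI[of _ 1] simp: one_enat_def)
  next
    fix l assume "1 \<le> l" "enat l \<le> T" "l \<le> length w" "c' = (i, drop l w, take l w @ ot)"
    then show "\<exists>inp w' out. (i, w, ot) = (inp, w', out) \<and>
        ((\<exists>k\<ge>1. enat k \<le> 1 \<and> k \<le> length inp \<and> c' = (drop k inp, take k inp @ w', out)) \<or>
         (\<exists>l\<ge>1. enat l \<le> T \<and> l \<le> length w' \<and> c' = (inp, drop l w', take l w' @ out)))"
      by blast
  qed
qed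

lemma step_push: "fs_step 1 T (x # i, w, ot) (i, x # w, ot)"
  by (simp add: step_iff)

lemma step_pop: "1 \<le> l \<Longrightarrow> enat l \<le> T \<Longrightarrow> l \<le> length w \<Longrightarrow> fs_step 1 T (i, w, ot) (i, drop l w, take l w @ ot)"
  by (auto simp add: step_iff)

fun framec :: "nat list \<Rightarrow> nat list \<Rightarrow> nat list \<Rightarrow> fs_config \<Rightarrow> fs_config" where
  "framec I W OT (i, w, ot) = (i @ I, w @ W, ot @ OT)"

lemma step_frame: "fs_step 1 T c c' \<Longrightarrow> fs_step 1 T (framec I W OT c) (framec I W OT c')"
proof -
  obtain i w ot where c: "c = (i, w, ot)" by (cases c) auto
  assume "fs_step 1 T c c'"
  then show ?thesis unfolding c step_iff
    by (auto simp: step_iff)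
qed

lemma rch_frame: "rch T c c' \<Longrightarrow> rch T (framec I W OT c) (framec I W OT c')"
  by (induction rule: rtranclp_induct) (auto intro: rtranclp.rtrancl_into_rtrancl step_frame)

lemma rch_frame': "rch T (i, w, ot) (i', w', ot') \<Longrightarrow> rch T (i @ I, w @ W, ot @ OT) (i' @ I, w' @ W, ot' @ OT)"
  using rch_frame[of T "(i, w, ot)" "(i', w', ot')" I W OT] by simp

fun mapc :: "(nat \<Rightarrow> nat) \<Rightarrow> fs_config \<Rightarrow> fs_config" where
  "mapc f (i, w, ot) = (map f i, map f w, map f ot)"

lemma step_map: "fs_step 1 T c c' \<Longrightarrow> fs_step 1 T (mapc f c) (mapc f c')"
proof -
  obtain i w ot where c: "c = (i, w, ot)" by (cases c) auto
  assume "fs_step 1 T c c'"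
  then show ?thesis unfolding c step_iff
    by (auto simp: step_iff hd_map map_tl take_map drop_map)
qed

lemma rch_map: "rch T c c' \<Longrightarrow> rch T (mapc f c) (mapc f c')"
  by (induction rule: rtranclp_induct) (auto intro: rtranclp.rtrancl_into_rtrancl step_map)

fun filterc :: "(nat \<Rightarrow> bool) \<Rightarrow> fs_config \<Rightarrow> fs_config" where
  "filterc P (i, w, ot) = (filter P i, filter P w, filter P ot)"

lemma step_filter: "fs_step 1 T c c' \<Longrightarrow> rch T (filterc P c) (filterc P c')"
proof -
  obtain i w ot where c: "c = (i, w, ot)" by (cases c) auto
  assume "fs_step 1 T c c'"
  then consider "i \<noteq> []" "c' = (tl i, hd i # w, ot)"
    | l where "1 \<le> l" "enat l \<le> T" "l \<le> length w" "c' = (i, drop l w, take l w @ ot)"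
    unfolding c step_iff by blast
  then show ?thesis
  proof cases
    case 1
    then obtain x i' where "i = x # i'" by (cases i) auto
    with 1 show ?thesis unfolding c
      by (cases "P x") (auto intro!: r_into_rtranclp step_push)
  next
    case 2
    define l' where "l' = length (filter P (take l w))"
    have wsplit: "filter P w = filter P (take l w) @ filter P (drop l w)"
      by (metis append_take_drop_id filter_append)
    show ?thesis
    proof (cases "l' = 0")
      case True
      then have "filter P (take l w) = []" unfolding l'_def by simp
      then show ?thesis unfolding c using 2 wsplit by simp
    next
      case False
      have "l' \<le> l" unfolding l'_def using 2 by (metis length_filter_le length_take min.absorb2)
      then have "enat l' \<le> T" using 2 by (meson enat_ord_simps(1) order_trans)
      moreover have "l' \<le> length (filter P w)" unfolding wsplit l'_def by simp
      ultimately have "fs_step 1 T (filter P i, filter P w, filter P ot)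
          (filter P i, drop l' (filter P w), take l' (filter P w) @ filter P ot)"
        using False by (intro step_pop) auto
      moreover have "take l' (filter P w) = filter P (take l w)"
        "drop l' (filter P w) = filter P (drop l w)" unfolding wsplit l'_def by auto
      ultimately show ?thesis unfolding c using 2 by auto
    qed
  qed
qed

lemma rch_filter: "rch T c c' \<Longrightarrow> rch T (filterc P c) (filterc P c')"
  by (induction rule: rtranclp_induct) (auto intro: rtranclp_trans step_filter)

lemma rch_mono: "rch T c c' \<Longrightarrow> T \<le> T' \<Longrightarrow> rch T' c c'"
proof (induction rule: rtranclp_induct)
  case (step y z)
  obtain i w ot where y: "y = (i, w, ot)" by (cases y) auto
  have "fs_step 1 T' y z" using step(2,4) unfolding y step_iff using order_trans by blast
  then show ?case using step by auto
qed auto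

definition gsrt :: "enat \<Rightarrow> nat list \<Rightarrow> bool" where
  "gsrt T p \<longleftrightarrow> rch T (p, [], []) ([], [], sort p)"

lemma gsrt_filter: "gsrt T p \<Longrightarrow> gsrt T (filter P p)"
  unfolding gsrt_def using rch_filter[of T "(p, [], [])" "([], [], sort p)" P]
  by (simp add: filter_sort)

lemma sort_map_mono:
  assumes "distinct p" "strict_mono_on (set p) f"
  shows "sort (map f p) = map f (sort p)"
proof -
  have inj: "inj_on f (set p)" using assms(2) strict_mono_on_imp_inj_on by blast
  have ss: "sorted_wrt (<) (sort p)" using assms(1) by (simp add: strict_sorted_iff)
  have s1: "sorted_wrt (<) (map f (sort p))"
    unfolding sorted_wrt_map
    by (rule sorted_wrt_mono_rel[OF _ ss]) (use assms(2) in \<open>auto simp: strict_mono_on_def\<close>)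
  have s2: "sorted_wrt (<) (sort (map f p))"
    using assms inj by (simp add: strict_sorted_iff distinct_map)
  show ?thesis by (rule strict_sorted_equal[OF s1 s2]) simp
qed

lemma gsrt_map:
  assumes "gsrt T p" "distinct p" "strict_mono_on (set p) f"
  shows "gsrt T (map f p)"
  using rch_map[of T "(p, [], [])" "([], [], sort p)" f] assms
  unfolding gsrt_def by (simp add: sort_map_mono)

definition rank :: "nat list \<Rightarrow> nat \<Rightarrow> nat" where
  "rank xs x = length (filter (\<lambda>y. y \<le> x) xs)"

definition std :: "nat list \<Rightarrow> nat list" where
  "std xs = map (rank xs) xs"

lemma rank_card: "distinct xs \<Longrightarrow> rank xs x = card {y \<in> set xs. y \<le> x}"
  unfolding rank_def by (simp add: distinct_length_filter Collect_conj_eq Int_commute)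

lemma rank_mono: assumes "distinct xs" shows "strict_mono_on (set xs) (rank xs)"
proof (rule strict_mono_onI)
  fix x y assume "x \<in> set xs" "y \<in> set xs" "x < y"
  then have "{z \<in> set xs. z \<le> x} \<subseteq> {z \<in> set xs. z \<le> y}" "y \<in> {z \<in> set xs. z \<le> y}"
    "y \<notin> {z \<in> set xs. z \<le> x}" by auto
  then have "{z \<in> set xs. z \<le> x} \<subset> {z \<in> set xs. z \<le> y}" by blast
  then show "rank xs x < rank xs y" using assms by (simp add: rank_card psubset_card_mono)
qed

lemma length_std[simp]: "length (std xs) = length xs" by (simp add: std_def)

lemma std_perm: assumes "distinct xs" shows "std xs \<in> permutations_of_set {1..length xs}"
proof -
  have inj: "inj_on (rank xs) (set xs)" using rank_mono[OF assms] strict_mono_on_imp_inj_on by blast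
  have sub: "rank xs ` set xs \<subseteq> {1..length xs}"
  proof
    fix r assume "r \<in> rank xs ` set xs"
    then obtain x where x: "x \<in> set xs" "r = rank xs x" by auto
    have "x \<in> {y \<in> set xs. y \<le> x}" using x by auto
    then have "0 < card {y \<in> set xs. y \<le> x}" by (subst card_gt_0_iff) auto
    moreover have "card {y \<in> set xs. y \<le> x} \<le> card (set xs)" by (rule card_mono) auto
    moreover have "card (set xs) = length xs" using assms by (rule distinct_card)
    moreover have "r = card {y \<in> set xs. y \<le> x}" using x(2) assms by (simp add: rank_card)
    ultimately show "r \<in> {1..length xs}" by simp
  qed
  have "card (rank xs ` set xs) = length xs" using inj assms by (simp add: card_image distinct_card)
  also have "\<dots> = card {1..length xs}" by simp
  finally have "rank xs ` set xs = {1..length xs}" using sub by (intro card_subset_eq) auto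
  then have "set (std xs) = {1..length xs}" by (simp add: std_def)
  moreover have "distinct (std xs)" using inj assms unfolding std_def by (simp add: distinct_map)
  ultimately show ?thesis by (simp add: permutations_of_set_def)
qed

lemma gsrt_std: "gsrt T xs \<Longrightarrow> distinct xs \<Longrightarrow> gsrt T (std xs)"
  unfolding std_def by (rule gsrt_map) (auto intro: rank_mono)

lemma std_shift:
  assumes "distinct xs" "set xs = {c<..c + length xs}"
  shows "map (\<lambda>x. x + c) (std xs) = xs"
proof -
  have "rank xs x + c = x" if "x \<in> set xs" for x
  proof -
    have "{y \<in> set xs. y \<le> x} = {c<..x}"
    proof
      show "{y \<in> set xs. y \<le> x} \<subseteq> {c<..x}" using assms(2) by auto
      show "{c<..x} \<subseteq> {y \<in> set xs. y \<le> x}" using assms(2) that by auto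
    qed
    then have "rank xs x = x - c" using assms(1) by (simp add: rank_card)
    moreover have "c < x" using that assms(2) by auto
    ultimately show ?thesis by simp
  qed
  then show ?thesis unfolding std_def by (simp add: map_idI)
qed

lemma sort_perm: assumes "p \<in> permutations_of_set {1..n}" shows "sort p = [1..<n+1]"
proof (rule sorted_distinct_set_unique)
  have "set p = {1..n}" "distinct p" using assms by (auto simp: permutations_of_set_def)
  moreover have "set [1..<n+1] = {1..n}" by auto
  ultimately show "set (sort p) = set [1..<n+1]" by simp
  show "distinct (sort p)" using \<open>distinct p\<close> by simp
qed (simp_all del: upt_Suc)

lemma length_perm: assumes "p \<in> permutations_of_set {1..n}" shows "length p = n"
proof -
  have "set p = {1..n}" "distinct p" using assms by (auto simp: permutations_of_set_def)
  then show ?thesis using distinct_card[of p] by simp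
qed

fun splits :: "'a list \<Rightarrow> ('a list \<times> 'a list) list" where
  "splits [] = []"
| "splits (x # xs) = ([x], xs) # map (\<lambda>(a, b). (x # a, b)) (splits xs)"

lemma splits_len: "p \<in> set (splits w) \<Longrightarrow> length (snd p) < length w"
  by (induction w arbitrary: p) (auto, fastforce)

lemma splits_in: "1 \<le> l \<Longrightarrow> l \<le> length w \<Longrightarrow> (take l w, drop l w) \<in> set (splits w)"
proof (induction w arbitrary: l)
  case (Cons x xs)
  show ?case
  proof (cases "l = 1")
    case False
    then obtain k where k: "l = Suc k" "1 \<le> k" "k \<le> length xs" using Cons.prems by (cases l) auto
    then have "(take k xs, drop k xs) \<in> set (splits xs)" using Cons.IH by blast
    then show ?thesis using k by force
  qed simp
qed simp

primrec decf :: "nat \<Rightarrow> nat list \<Rightarrow> nat list \<Rightarrow> nat list \<Rightarrow> nat list \<Rightarrow> bool" where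
  "decf 0 F i w ot = (i = [] \<and> w = [] \<and> ot = F)"
| "decf (Suc n) F i w ot = ((i = [] \<and> w = [] \<and> ot = F) \<or>
     (case i of [] \<Rightarrow> False | x # i' \<Rightarrow> decf n F i' (x # w) ot) \<or>
     list_ex (\<lambda>p. decf n F i (snd p) (fst p @ ot)) (splits w))"

lemma dec_complete: "rch \<infinity> c ([], [], F) \<Longrightarrow>
   \<forall>N. 2 * length (fst c) + length (fst (snd c)) \<le> N \<longrightarrow> decf N F (fst c) (fst (snd c)) (snd (snd c))"
proof (induction rule: converse_rtranclp_induct)
  case base
  show ?case
  proof (intro allI impI)
    fix N show "decf N F (fst ([], [], F)) (fst (snd ([], [], F))) (snd (snd ([], [], F)))"
      by (cases N) auto
  qed
next
  case (step y z)
  obtain i w ot where y: "y = (i, w, ot)" by (cases y) auto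
  show ?case
  proof (intro allI impI)
    fix N assume N: "2 * length (fst y) + length (fst (snd y)) \<le> N"
    from step(1) consider "i \<noteq> []" "z = (tl i, hd i # w, ot)"
      | l where "1 \<le> l" "l \<le> length w" "z = (i, drop l w, take l w @ ot)"
      unfolding y step_iff by auto
    then show "decf N F (fst y) (fst (snd y)) (snd (snd y))"
    proof cases
      case 1
      then obtain x i' where i: "i = x # i'" by (cases i) auto
      with N y obtain N' where N': "N = Suc N'" "2 * length i' + Suc (length w) \<le> N'"
        by (cases N) auto
      have "decf N' F i' (x # w) ot" using step(3) 1 i N' by auto
      then show ?thesis using y i N' by simp
    next
      case 2
      then have sp: "(take l w, drop l w) \<in> set (splits w)" by (auto intro: splits_in)
      from N y 2 obtain N' where N': "N = Suc N'" "2 * length i + length (drop l w) \<le> N'"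
        by (cases N) auto
      have "decf N' F i (drop l w) (take l w @ ot)" using step(3) 2 N' by auto
      then have "list_ex (\<lambda>p. decf N' F i (snd p) (fst p @ ot)) (splits w)"
        using sp unfolding list_ex_iff by force
      then show ?thesis using y N' by simp
    qed
  qed
qed

lemma pat_bad:
  assumes "gsrt T p"
  shows "decf (2 * length p) (sort p) p [] []"
proof -
  have "rch \<infinity> (p, [], []) ([], [], sort p)" using assms(1) unfolding gsrt_def
    by (rule rch_mono) simp
  from dec_complete[OF this] show ?thesis by simp
qed

definition sfx :: "nat list \<Rightarrow> nat list \<Rightarrow> bool" where
  "sfx xs ys \<longleftrightarrow> (\<exists>zs. ys = zs @ xs)"

lemma sfx_app: "sfx (a @ xs) ys \<Longrightarrow> sfx xs ys"
  unfolding sfx_def by (metis append.assoc)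

lemma sfx_last: "sfx xs ys \<Longrightarrow> xs \<noteq> [] \<Longrightarrow> last xs = last ys"
  unfolding sfx_def by auto

lemma Q_bad:
  assumes "gsrt (enat t) (rev [1..<u+1] @ [Suc u])"
  shows "u \<le> t"
proof (rule ccontr)
  assume tu: "\<not> u \<le> t"
  define Q where "Q = rev [1..<u+1] @ [Suc u]"
  define F where "F = [1..<u+2]"
  have lenQ: "length Q = Suc u" unfolding Q_def by simp
  have sQ: "sort Q = F"
  proof -
    have "sort Q = sort (rev [1..<Suc u] @ [Suc u])" unfolding Q_def by simp
    also have "\<dots> = F" unfolding F_def
      by (rule sorted_distinct_set_unique) (auto simp del: upt_Suc)
    finally show ?thesis .
  qed
  define Inv where "Inv c \<longleftrightarrow> (\<exists>k\<le>Suc u. c = (drop k Q, rev (take k Q), [])) \<or>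
      c = ([], [1..<u+1], [Suc u]) \<or> \<not> sfx (snd (snd c)) F" for c
  have lastF: "last F = Suc u" unfolding F_def by simp
  have "Inv c" if "rch (enat t) (Q, [], []) c" for c
    using that
  proof (induction rule: rtranclp_induct)
    case base
    then show ?case unfolding Inv_def by (auto intro!: exI[of _ 0])
  next
    case (step y z)
    obtain i w ot where y: "y = (i, w, ot)" by (cases y) auto
    from step(2) consider "i \<noteq> []" "z = (tl i, hd i # w, ot)"
      | l where "1 \<le> l" "enat l \<le> enat t" "l \<le> length w" "z = (i, drop l w, take l w @ ot)"
      unfolding y step_iff by auto
    note cs = this
    from step(3) consider (A) k where "k \<le> Suc u" "y = (drop k Q, rev (take k Q), [])"
      | (B) "y = ([], [1..<u+1], [Suc u])" | (C) "\<not> sfx ot F"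
      unfolding Inv_def y by auto
    then show ?case
    proof cases
      case (A k)
      then have i: "i = drop k Q" "w = rev (take k Q)" "ot = []" using y by auto
      show ?thesis
      proof (cases rule: cs)
        case 1
        then have "k < Suc u" using i lenQ by auto
        then have "z = (drop (Suc k) Q, rev (take (Suc k) Q), [])"
          using 1 i lenQ by (simp add: tl_drop drop_Suc hd_drop_conv_nth take_Suc_conv_app_nth)
        then show ?thesis unfolding Inv_def using \<open>k < Suc u\<close>
          by (intro disjI1 exI[of _ "Suc k"]) auto
      next
        case (2 l)
        show ?thesis
        proof (cases "k \<le> u")
          case True
          then have tk: "take k Q = take k (rev [1..<u+1])" unfolding Q_def by simp
          have ne: "take l w \<noteq> []" using 2 by auto
          have "last (take l w) \<in> set w" using ne by (meson in_set_takeD last_in_set)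
          then have "last (take l w) \<in> set (rev [1..<u+1])" using i tk by (auto dest: in_set_takeD)
          then have "last (take l w) \<le> u" by auto
          then have "\<not> sfx (take l w) F" using sfx_last[OF _ ne] lastF by force
          then have "\<not> sfx (take l w @ ot) F" using i by simp
          then show ?thesis unfolding Inv_def using 2 by simp
        next
          case False
          then have "k = Suc u" using A by simp
          then have w: "w = Suc u # [1..<u+1]" using i lenQ unfolding Q_def by simp
          have i0: "i = []" using i lenQ \<open>k = Suc u\<close> by simp
          show ?thesis
          proof (cases "l = 1")
            case True
            then show ?thesis unfolding Inv_def using 2 w i i0 by (simp del: upt_Suc)
          next
            case False
            then obtain l' where l': "l = Suc l'" "1 \<le> l'" "l' \<le> u" using 2 w by (cases l) (auto simp del: upt_Suc)
            have tl': "take l w = Suc u # [1..<l'+1]" using w l' by (simp add: take_upt del: upt_Suc)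
            have "last (take l w) = l'" unfolding tl' using l' by (simp add: last_upt del: upt_Suc)
            moreover have "take l w \<noteq> []" unfolding tl' by simp
            ultimately have "\<not> sfx (take l w) F" using sfx_last[of "take l w" F] lastF l' by auto
            then show ?thesis unfolding Inv_def using 2 i by simp
          qed
        qed
      qed
    next
      case B
      then have i: "i = []" "w = [1..<u+1]" "ot = [Suc u]" using y by auto
      show ?thesis
      proof (cases rule: cs)
        case 1 then show ?thesis using i by simp
      next
        case (2 l)
        have lu: "l < u" using 2 tu by simp
        have tw: "take l w = [1..<l+1]" using i lu by (simp add: take_upt del: upt_Suc)
        have "\<not> sfx ([1..<l+1] @ [Suc u]) F"
        proof
          assume "sfx ([1..<l+1] @ [Suc u]) F"
          then obtain zs where "F = zs @ [1..<l+1] @ [Suc u]" unfolding sfx_def by auto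
          moreover have "F = [1..<u+1] @ [Suc u]" unfolding F_def by simp
          ultimately have e: "[1..<u+1] = zs @ [1..<l+1]" by simp
          then have "length zs = u - l" by (metis add_diff_cancel_right' length_append length_upt)
          then have "drop (u - l) [1..<u+1] = [1..<l+1]" using e by simp
          moreover have "drop (u - l) [1..<u+1] = [1 + (u - l)..<u+1]" by simp
          ultimately have "[1 + (u - l)..<u+1] = [1..<l+1]" by simp
          then have "hd [1 + (u - l)..<u+1] = hd [1..<l+1]" by simp
          then show False using lu 2 by (simp add: hd_upt del: upt_Suc)
        qed
        then show ?thesis unfolding Inv_def using 2 i tw by simp
      qed
    next
      case C
      show ?thesis
      proof (cases rule: cs)
        case 1 then show ?thesis using C unfolding Inv_def by simp
      next
        case (2 l) then show ?thesis using C sfx_app[of "take l w" ot F] unfolding Inv_def by auto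
      qed
    qed
  qed
  moreover have "rch (enat t) (Q, [], []) ([], [], F)"
    using assms unfolding gsrt_def Q_def[symmetric] sQ .
  ultimately have "Inv ([], [], F)" by blast
  moreover have "sfx F F" unfolding sfx_def by simp
  moreover have "[1..<u+1] \<noteq> []" using tu by simp
  moreover have "F \<noteq> []" unfolding F_def by simp
  ultimately show False unfolding Inv_def by (auto simp del: upt_Suc)
qed

abbreviation sumlen :: "nat list list \<Rightarrow> nat" where
  "sumlen gs \<equiv> sum_list (map length gs)"

fun blk :: "nat \<Rightarrow> nat \<Rightarrow> nat list list \<Rightarrow> nat list" where
  "blk a c [] = []"
| "blk a c (g # gs) = (a + length gs) # map (\<lambda>x. x + (c + sumlen gs)) g @ blk a c gs"

lemma map_plus_upt: "map (\<lambda>x. x + c) [i..<j] = [i + c..<j + c]"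
  by (induction j) auto

lemma upt_app: "i \<le> j \<Longrightarrow> j \<le> k \<Longrightarrow> [i..<j] @ [j..<k] = [i..<k]"
  by (metis le_add_diff_inverse upt_add_eq_append)

lemma length_blk: "length (blk a c gs) = length gs + sumlen gs"
  by (induction gs) auto

lemma run_blk:
  assumes "\<forall>g\<in>set gs. gsrt T g \<and> g \<in> permutations_of_set {1..length g}"
  shows "rch T (blk a c gs @ R, W, OT) (R, [a..<a + length gs] @ W, [c + 1..<c + sumlen gs + 1] @ OT)"
  using assms
proof (induction gs arbitrary: R W OT)
  case Nil
  then show ?case by simp
next
  case (Cons g gs)
  define k where "k = c + sumlen gs"
  define p where "p = a + length gs"
  have g: "gsrt T g" "g \<in> permutations_of_set {1..length g}" using Cons.prems by auto
  have s1: "rch T (blk a c (g # gs) @ R, W, OT) (map (\<lambda>x. x + k) g @ blk a c gs @ R, p # W, OT)"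
    unfolding k_def p_def by (auto intro!: r_into_rtranclp step_push)
  have "rch T (g, [], []) ([], [], [1..<length g + 1])"
    using g unfolding gsrt_def by (simp add: sort_perm)
  from rch_map[OF this, of "\<lambda>x. x + k"]
  have "rch T (map (\<lambda>x. x + k) g, [], []) ([], [], [k + 1..<k + length g + 1])"
    by (simp add: map_plus_upt add.commute del: upt_Suc)
  from rch_frame'[OF this, of "blk a c gs @ R" "p # W" OT]
  have s2: "rch T (map (\<lambda>x. x + k) g @ blk a c gs @ R, p # W, OT)
      (blk a c gs @ R, p # W, [k + 1..<k + length g + 1] @ OT)" by simp
  have s3: "rch T (blk a c gs @ R, p # W, [k + 1..<k + length g + 1] @ OT)
     (R, [a..<a + length gs] @ p # W, [c + 1..<c + sumlen gs + 1] @ [k + 1..<k + length g + 1] @ OT)"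
    using Cons by simp
  have e1: "[a..<a + length gs] @ p # W = [a..<a + length (g # gs)] @ W" unfolding p_def by simp
  have e2: "[c + 1..<c + sumlen gs + 1] @ [k + 1..<k + length g + 1] = [c + 1..<c + sumlen (g # gs) + 1]"
    unfolding k_def by (subst upt_app) (auto simp: ac_simps)
  have all: "rch T (blk a c (g # gs) @ R, W, OT)
     (R, [a..<a + length gs] @ p # W, ([c + 1..<c + sumlen gs + 1] @ [k + 1..<k + length g + 1]) @ OT)"
    using rtranclp_trans[OF rtranclp_trans[OF s1 s2] s3] by (simp only: append_assoc)
  then show ?case by (simp only: e1 e2)
qed

lemma set_blk:
  assumes "\<forall>g\<in>set gs. g \<in> permutations_of_set {1..length g}" "a + length gs \<le> c + 1"
  shows "set (blk a c gs) = {a..<a + length gs} \<union> {c<..c + sumlen gs} \<and> distinct (blk a c gs)"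
  using assms
proof (induction gs)
  case Nil
  then show ?case by simp
next
  case (Cons g gs)
  define k where "k = c + sumlen gs"
  define p where "p = a + length gs"
  have g: "set g = {1..length g}" "distinct g" using Cons.prems by (auto simp: permutations_of_set_def)
  have IH: "set (blk a c gs) = {a..<p} \<union> {c<..k} \<and> distinct (blk a c gs)"
    using Cons unfolding p_def k_def by simp
  have sm: "set (map (\<lambda>x. x + k) g) = {k<..k + length g}"
  proof -
    have "set (map (\<lambda>x. x + k) g) = (\<lambda>x. x + k) ` {1..length g}" using g by simp
    also have "\<dots> = {k<..k + length g}"
    proof
      show "(\<lambda>x. x + k) ` {1..length g} \<subseteq> {k<..k + length g}" by auto
      show "{k<..k + length g} \<subseteq> (\<lambda>x. x + k) ` {1..length g}"
      proof
        fix y assume "y \<in> {k<..k + length g}"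
        then have "y = (y - k) + k" "y - k \<in> {1..length g}" by auto
        then show "y \<in> (\<lambda>x. x + k) ` {1..length g}" by blast
      qed
    qed
    finally show ?thesis .
  qed
  have pc: "p \<le> c" using Cons.prems(2) unfolding p_def by simp
  have kc: "c \<le> k" unfolding k_def by simp
  have "set (blk a c (g # gs)) = {p} \<union> {k<..k + length g} \<union> ({a..<p} \<union> {c<..k})"
    using IH sm unfolding p_def k_def by auto
  also have "\<dots> = {a..<a + length (g # gs)} \<union> {c<..c + sumlen (g # gs)}"
    using pc kc unfolding p_def k_def by auto
  finally have s: "set (blk a c (g # gs)) = {a..<a + length (g # gs)} \<union> {c<..c + sumlen (g # gs)}" .
  have "distinct (map (\<lambda>x. x + k) g)" using g by (simp add: distinct_map)
  moreover have "p \<notin> set (map (\<lambda>x. x + k) g)" using sm pc kc by auto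
  moreover have "p \<notin> set (blk a c gs)" using IH pc by auto
  moreover have "set (map (\<lambda>x. x + k) g) \<inter> set (blk a c gs) = {}" using sm IH pc kc by auto
  ultimately have "distinct (blk a c (g # gs))" using IH unfolding p_def k_def by simp
  with s show ?case by blast
qed

lemma hd_blk: "gs \<noteq> [] \<Longrightarrow> hd (blk a c gs) = a + length gs - 1"
  by (cases gs) auto

lemma blk_ne: "gs \<noteq> [] \<Longrightarrow> blk a c gs \<noteq> []"
  by (cases gs) auto

lemma blk_inj:
  assumes "length gs = length gs'" "a + length gs \<le> c + 1"
    "\<forall>g\<in>set gs. 0 \<notin> set g" "\<forall>g\<in>set gs'. 0 \<notin> set g" "blk a c gs = blk a c gs'"
  shows "gs = gs'"
  using assms
proof (induction gs arbitrary: gs')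
  case Nil
  then show ?case by simp
next
  case (Cons g gs)
  then obtain g' hs where gs': "gs' = g' # hs" by (cases gs') auto
  define k where "k = c + sumlen gs"
  define k' where "k' = c + sumlen hs"
  have len: "length gs = length hs" using Cons.prems gs' by simp
  have eq: "map (\<lambda>x. x + k) g @ blk a c gs = map (\<lambda>x. x + k') g' @ blk a c hs"
    using Cons.prems(5) gs' len unfolding k_def k'_def by simp
  have g0: "\<forall>x\<in>set g. 0 < x" using Cons.prems(3) by (metis gr0I list.set_intros(1))
  have g0': "\<forall>x\<in>set g'. 0 < x" using Cons.prems(4) gs' by (metis gr0I list.set_intros(1))
  have P1: "\<forall>x\<in>set (map (\<lambda>x. x + k) g). c < x" using g0 unfolding k_def by auto
  have P2: "\<forall>x\<in>set (map (\<lambda>x. x + k') g'). c < x" using g0' unfolding k'_def by auto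
  have Q: "takeWhile (\<lambda>x. c < x) (blk a c xs) = [] \<and> dropWhile (\<lambda>x. c < x) (blk a c xs) = blk a c xs"
    if "a + length xs \<le> c" for xs
  proof (cases xs)
    case (Cons y ys)
    then show ?thesis using that by simp
  qed simp
  have Q1: "takeWhile (\<lambda>x. c < x) (blk a c gs) = []" "dropWhile (\<lambda>x. c < x) (blk a c gs) = blk a c gs"
    using Q[of gs] Cons.prems(2) by auto
  have Q2: "takeWhile (\<lambda>x. c < x) (blk a c hs) = []" "dropWhile (\<lambda>x. c < x) (blk a c hs) = blk a c hs"
    using Q[of hs] Cons.prems(2) len by auto
  have "takeWhile (\<lambda>x. c < x) (map (\<lambda>x. x + k) g @ blk a c gs) = map (\<lambda>x. x + k) g"
    by (rule trans[OF takeWhile_append2]) (use P1 Q1 in auto)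
  moreover have "takeWhile (\<lambda>x. c < x) (map (\<lambda>x. x + k') g' @ blk a c hs) = map (\<lambda>x. x + k') g'"
    by (rule trans[OF takeWhile_append2]) (use P2 Q2 in auto)
  ultimately have m: "map (\<lambda>x. x + k) g = map (\<lambda>x. x + k') g'" using eq by simp
  then have "blk a c gs = blk a c hs" using eq by simp
  then have "gs = hs" using Cons.IH[of hs] Cons.prems gs' len by simp
  then have "k = k'" unfolding k_def k'_def by simp
  then have "g = g'" using m by (simp add: inj_map_eq_map inj_def)
  then show ?case using gs' \<open>gs = hs\<close> by simp
qed

lemma last_blk:
  assumes "gs \<noteq> []" "last gs \<noteq> []" "\<forall>g\<in>set gs. 0 \<notin> set g"
  shows "c < last (blk a c gs)"
  using assms
proof (induction gs)
  case Nil then show ?case by simp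
next
  case (Cons g gs)
  show ?case
  proof (cases "gs = []")
    case True
    then have "g \<noteq> []" "0 \<notin> set g" using Cons.prems by auto
    then have "0 < last g" by (metis gr0I last_in_set)
    then show ?thesis using True \<open>g \<noteq> []\<close> by (simp add: last_map)
  next
    case False
    then have "c < last (blk a c gs)" using Cons by simp
    then show ?thesis using False by (simp add: blk_ne)
  qed
qed

function splitL :: "nat \<Rightarrow> nat list \<Rightarrow> nat list list" where
  "splitL c xs = (case dropWhile (\<lambda>x. c < x) xs of
      [] \<Rightarrow> [takeWhile (\<lambda>x. c < x) xs]
    | y # r \<Rightarrow> takeWhile (\<lambda>x. c < x) xs # splitL c r)"
  by pat_completeness auto
termination
proof (relation "measure (\<lambda>(c, xs). length xs)")
  fix c xs y r assume "dropWhile (\<lambda>x. c < x) xs = y # r"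
  moreover have "length (dropWhile (\<lambda>x. c < x) xs) \<le> length xs" by (rule length_dropWhile_le)
  ultimately show "((c, r), c, xs) \<in> measure (\<lambda>(c, xs). length xs)" by simp
qed simp

declare splitL.simps[simp del]

lemma splitL_all: assumes "\<forall>x\<in>set xs. c < x" shows "splitL c xs = [xs]"
proof -
  have "dropWhile (\<lambda>x. c < x) xs = []" using assms by (simp add: dropWhile_eq_Nil_conv)
  moreover have "takeWhile (\<lambda>x. c < x) xs = xs" using assms by (simp add: takeWhile_eq_all_conv)
  ultimately show ?thesis
    by (subst splitL.simps) (simp del: dropWhile_eq_Nil_conv takeWhile_eq_all_conv)
qed

lemma splitL_cons: "\<forall>x\<in>set g. c < x \<Longrightarrow> \<not> c < l \<Longrightarrow> splitL c (g @ l # r) = g # splitL c r"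
  by (subst splitL.simps) (simp add: dropWhile_append2 takeWhile_append2)

lemma splitL_split:
  obtains (all) "\<forall>x\<in>set xs. c < x" "splitL c xs = [xs]"
  | (cons) g l r where "xs = g @ l # r" "\<forall>x\<in>set g. c < x" "\<not> c < l" "splitL c xs = g # splitL c r"
proof (cases "\<forall>x\<in>set xs. c < x")
  case True
  then show ?thesis using all splitL_all by blast
next
  case False
  define g where "g = takeWhile (\<lambda>x. c < x) xs"
  have "dropWhile (\<lambda>x. c < x) xs \<noteq> []" using False by (simp add: dropWhile_eq_Nil_conv)
  then obtain l r where lr: "dropWhile (\<lambda>x. c < x) xs = l # r" by (cases "dropWhile (\<lambda>x. c < x) xs") auto
  have xs: "xs = g @ l # r" unfolding g_def using lr takeWhile_dropWhile_id by metis
  have g: "\<forall>x\<in>set g. c < x" unfolding g_def by (auto dest: set_takeWhileD)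
  have l: "\<not> c < l" using lr by (metis hd_dropWhile list.distinct(1) list.sel(1))
  show ?thesis using cons[OF xs g l] splitL_cons[OF g l] xs by blast
qed

lemma splitL_len: "length (splitL c xs) = length (filter (\<lambda>x. \<not> c < x) xs) + 1"
proof (induction "length xs" arbitrary: xs rule: less_induct)
  case less
  show ?case
  proof (cases xs rule: splitL_split[of _ c])
    case all
    then show ?thesis by (simp add: filter_empty_conv)
  next
    case (cons g l r)
    have "length r < length xs" using cons by simp
    then show ?thesis using less cons by (simp add: filter_empty_conv)
  qed
qed

lemma splitL_sum: "sumlen (splitL c xs) = length (filter (\<lambda>x. c < x) xs)"
proof (induction "length xs" arbitrary: xs rule: less_induct)
  case less
  show ?case
  proof (cases xs rule: splitL_split[of _ c])
    case all
    then show ?thesis by simp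
  next
    case (cons g l r)
    have "length r < length xs" using cons by simp
    moreover have "filter (\<lambda>x. c < x) g = g" using cons by simp
    ultimately show ?thesis using less cons by simp
  qed
qed

lemma splitL_infix: "g \<in> set (splitL c xs) \<Longrightarrow> \<exists>A B. xs = A @ g @ B"
proof (induction "length xs" arbitrary: xs rule: less_induct)
  case less
  show ?case
  proof (cases xs rule: splitL_split[of _ c])
    case all
    then have "g = xs" using less.prems by simp
    then show ?thesis by (intro exI[of _ "[]"]) simp
  next
    case (cons g' l r)
    show ?thesis
    proof (cases "g = g'")
      case True then show ?thesis using cons by auto
    next
      case False
      then have "g \<in> set (splitL c r)" using less.prems cons by simp
      moreover have "length r < length xs" using cons by simp
      ultimately obtain A B where "r = A @ g @ B" using less by blast
      then show ?thesis using cons by (intro exI[of _ "g' @ l # A"] exI[of _ B]) simp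
    qed
  qed
qed

lemma splitL_last: "xs \<noteq> [] \<Longrightarrow> c < last xs \<Longrightarrow> last (splitL c xs) \<noteq> []"
proof (induction "length xs" arbitrary: xs rule: less_induct)
  case less
  show ?case
  proof (cases xs rule: splitL_split[of _ c])
    case all
    then show ?thesis using less by auto
  next
    case (cons g l r)
    have "r \<noteq> []" using cons less.prems by auto
    then have "last r = last xs" using cons by simp
    moreover have "length r < length xs" using cons by simp
    ultimately have "last (splitL c r) \<noteq> []" using less \<open>r \<noteq> []\<close> by simp
    moreover have "splitL c r \<noteq> []" using splitL_len[of c r] by auto
    ultimately show ?thesis using cons by simp
  qed
qed

lemma splitL_nil: "splitL c [] = [[]]"
  by (simp add: splitL_all)

lemma ivl_split:
  assumes "A \<union> B = {c<..c + K}" "A \<inter> B = {}" "\<forall>x\<in>A. \<forall>y\<in>B. y < x"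
  shows "B = {c<..c + card B}" "A = {c + card B<..c + K}" "card B \<le> K"
proof -
  have fin: "finite B" using assms(1) by (metis finite_Un finite_greaterThanAtMost)
  have dc: "z \<in> B" if "y \<in> B" "c < z" "z \<le> y" for y z
  proof -
    have "y \<in> {c<..c + K}" using that assms(1) by auto
    then have "z \<in> A \<union> B" using that assms(1) by auto
    then show ?thesis using assms(3) that by force
  qed
  have sub: "B \<subseteq> {c<..c + card B}"
  proof
    fix y assume y: "y \<in> B"
    have yc: "c < y" using y assms(1) by auto
    have "{c<..y} \<subseteq> B" using dc y by auto
    then have "card {c<..y} \<le> card B" using fin by (rule card_mono[rotated])
    then show "y \<in> {c<..c + card B}" using yc by auto
  qed
  then show B: "B = {c<..c + card B}" by (intro card_subset_eq) auto
  show "card B \<le> K"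
  proof -
    have "B \<subseteq> {c<..c + K}" using assms(1) by auto
    then have "card B \<le> card {c<..c + K}" by (rule card_mono[rotated]) simp
    then show ?thesis by simp
  qed
  have "A = {c<..c + K} - B" using assms(1,2) by blast
  also have "\<dots> = {c<..c + K} - {c<..c + card B}" using B by simp
  also have "\<dots> = {c + card B<..c + K}" by auto
  finally show "A = {c + card B<..c + K}" .
qed

lemma shape:
  assumes "distinct X" "filter (\<lambda>x. \<not> c < x) X = rev [a..<p]" "a \<le> p"
    "set (filter (\<lambda>x. c < x) X) = {c<..c + K}"
    "\<forall>A x B l C y D. X = A @ x # B @ l # C @ y # D \<longrightarrow> c < x \<longrightarrow> \<not> c < l \<longrightarrow> c < y \<longrightarrow> y < x"
  shows "p # X = blk a c (map std (splitL c X))"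
  using assms
proof (induction "length X" arbitrary: X p K rule: less_induct)
  case less
  show ?case
  proof (cases X rule: splitL_split[of _ c])
    case all
    then have "filter (\<lambda>x. \<not> c < x) X = []" by (simp add: filter_empty_conv)
    then have "[a..<p] = []" using less.prems(2) by simp
    then have "p = a" using less.prems(3) by (cases "a < p") auto
    have "set X = {c<..c + K}" using less.prems(4) all by simp
    moreover have "card (set X) = length X" using less.prems(1) by (rule distinct_card)
    ultimately have "set X = {c<..c + length X}" by simp
    then have "map (\<lambda>x. x + c) (std X) = X" using std_shift less.prems(1) by blast
    then show ?thesis using all \<open>p = a\<close> by simp
  next
    case (cons g l r)
    have fl: "filter (\<lambda>x. \<not> c < x) X = l # filter (\<lambda>x. \<not> c < x) r"
      using cons by simp
    then have "rev [a..<p] \<noteq> []" using less.prems(2) by simp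
    then have ap: "a < p" by simp
    then have "rev [a..<p] = (p - 1) # rev [a..<p - 1]"
      by (cases p) auto
    then have lp: "l = p - 1" and fr: "filter (\<lambda>x. \<not> c < x) r = rev [a..<p - 1]"
      using fl less.prems(2) by auto
    have dist: "distinct r" "distinct g" "set g \<inter> set r = {}" "l \<notin> set r"
      using less.prems(1) cons by auto
    have stk: "\<forall>x\<in>set g. \<forall>y\<in>set (filter (\<lambda>x. c < x) r). y < x"
    proof (intro ballI)
      fix x y assume x: "x \<in> set g" and y: "y \<in> set (filter (\<lambda>x. c < x) r)"
      obtain A B where A: "g = A @ x # B" using x by (meson split_list)
      have "y \<in> set r" using y by simp
      then obtain C D where C: "r = C @ y # D" by (meson split_list)
      have Xe: "X = A @ x # B @ l # C @ y # D" using cons A C by simp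
      moreover have "c < x" using cons x by auto
      moreover have "c < y" using y by simp
      moreover have "\<not> c < l" using cons by simp
      ultimately show "y < x" using less.prems(5) by blast
    qed
    have Hs: "set g \<union> set (filter (\<lambda>x. c < x) r) = {c<..c + K}"
      using less.prems(4) cons by auto
    have Hd: "set g \<inter> set (filter (\<lambda>x. c < x) r) = {}" using dist by auto
    define K' where "K' = card (set (filter (\<lambda>x. c < x) r))"
    have Hr: "set (filter (\<lambda>x. c < x) r) = {c<..c + K'}" and Hg: "set g = {c + K'<..c + K}"
      and KK: "K' \<le> K"
      using ivl_split[OF Hs Hd stk] unfolding K'_def by auto
    have K'l: "K' = length (filter (\<lambda>x. c < x) r)" unfolding K'_def
      using dist(1) distinct_card[of "filter (\<lambda>x. c < x) r"] by simp
    have stk_r: "\<forall>A x B l C y D. r = A @ x # B @ l # C @ y # D \<longrightarrow> c < x \<longrightarrow> \<not> c < l \<longrightarrow> c < y \<longrightarrow> y < x"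
    proof (intro allI impI)
      fix A x B l' C y D assume "r = A @ x # B @ l' # C @ y # D" "c < x" "\<not> c < l'" "c < y"
      then show "y < x" using less.prems(5)[rule_format, of "g @ l # A" x B l' C y D] cons by simp
    qed
    have len: "length r < length X" using cons by simp
    have IH: "(p - 1) # r = blk a c (map std (splitL c r))"
      using less.hyps[OF len dist(1) fr _ Hr stk_r] ap by simp
    define gs' where "gs' = map std (splitL c r)"
    have lg: "length gs' = p - a" unfolding gs'_def using splitL_len[of c r] fr ap by simp
    have sg: "sumlen gs' = K'" unfolding gs'_def K'l
      using splitL_sum[of c r] by (simp add: comp_def)
    have "card (set g) = length g" using dist(2) by (rule distinct_card)
    then have "length g = K - K'" using Hg by simp
    then have "c + K' + length g = c + K" using KK by simp
    then have "set g = {c + K'<..c + K' + length g}" using Hg by (simp add: add.assoc)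
    then have mg: "map (\<lambda>x. x + (c + K')) (std g) = g" using std_shift dist(2) by (simp add: add.assoc)
    have "blk a c (map std (splitL c X)) = blk a c (std g # gs')" using cons unfolding gs'_def by simp
    also have "\<dots> = p # g @ blk a c gs'" using lg sg mg ap by simp
    also have "\<dots> = p # g @ l # r" using IH lp unfolding gs'_def by simp
    finally show ?thesis using cons by simp
  qed
qed

definition SS :: "nat \<Rightarrow> nat list set" where
  "SS t = {p. (\<exists>k. p \<in> permutations_of_set {1..k}) \<and> gsrt (enat t) p}"

fun build :: "nat list list \<times> nat list \<Rightarrow> nat list" where
  "build (gs, d) = blk (length d + 1) (length d + length gs) gs @ d"

definition TT :: "nat \<Rightarrow> (nat list list \<times> nat list) set" where
  "TT t = {(gs, d). 1 \<le> length gs \<and> length gs \<le> t \<and> set gs \<subseteq> SS t \<and> d \<in> SS t \<and>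
      (last gs \<noteq> [] \<or> gs = [[]])}"

lemma SS_perm: "p \<in> SS t \<Longrightarrow> p \<in> permutations_of_set {1..length p}"
  unfolding SS_def using length_perm by blast

lemma SS_gsrt: "p \<in> SS t \<Longrightarrow> gsrt (enat t) p"
  unfolding SS_def by blast

lemma perm_0: "p \<in> permutations_of_set {1..length p} \<Longrightarrow> 0 \<notin> set p"
  by (auto simp: permutations_of_set_def)

lemma build_len: "length (build x) = length (fst x) + sumlen (fst x) + length (snd x)"
  by (cases x) (simp add: length_blk)

lemma build_SS:
  assumes "x \<in> TT t"
  shows "build x \<in> SS t" "build x \<noteq> []"
proof -
  obtain gs d where x: "x = (gs, d)" by (cases x) auto
  define u where "u = length gs"
  define n where "n = u + sumlen gs + length d"
  have u1: "1 \<le> u" "u \<le> t" using assms unfolding x TT_def u_def by auto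
  have sub: "set gs \<subseteq> SS t" using assms unfolding x TT_def by auto
  have gsP: "\<forall>g\<in>set gs. gsrt (enat t) g \<and> g \<in> permutations_of_set {1..length g}"
    using sub SS_perm SS_gsrt by blast
  have dS: "d \<in> SS t" using assms unfolding x TT_def by auto
  have dP: "d \<in> permutations_of_set {1..length d}" "gsrt (enat t) d"
    using SS_perm[OF dS] SS_gsrt[OF dS] by auto
  have dset: "set d = {1..length d}" "distinct d" using dP(1) by (auto simp: permutations_of_set_def)
  have sb: "set (blk (length d + 1) (length d + u) gs) =
      {length d + 1..<length d + 1 + u} \<union> {length d + u<..length d + u + sumlen gs}
      \<and> distinct (blk (length d + 1) (length d + u) gs)"
    using set_blk[of gs "length d + 1" "length d + u"] gsP unfolding u_def by simp
  note sb' = sb[unfolded u_def]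
  have "set (build x) = {1..n}" unfolding x n_def u_def using sb' dset by auto
  moreover have "distinct (build x)" unfolding x using sb' dset by auto
  ultimately have perm: "build x \<in> permutations_of_set {1..n}" by (simp add: permutations_of_set_def)
  have r1: "rch (enat t) (blk (length d + 1) (length d + u) gs @ d, [], [])
      (d, [length d + 1..<length d + 1 + u], [length d + u + 1..<length d + u + sumlen gs + 1])"
    using run_blk[OF gsP, of "length d + 1" "length d + u" d "[]" "[]"] unfolding u_def by simp
  have r2: "rch (enat t) (d, [length d + 1..<length d + 1 + u], [length d + u + 1..<length d + u + sumlen gs + 1])
      (d, [], [length d + 1..<length d + 1 + u] @ [length d + u + 1..<length d + u + sumlen gs + 1])"
    using step_pop[of u "enat t" "[length d + 1..<length d + 1 + u]" d "[length d + u + 1..<length d + u + sumlen gs + 1]"] u1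
    by (auto intro!: r_into_rtranclp)
  have "rch (enat t) (d, [], []) ([], [], [1..<length d + 1])" using dP unfolding gsrt_def by (simp add: sort_perm)
  from rch_frame'[OF this, of "[]" "[]" "[length d + 1..<length d + 1 + u] @ [length d + u + 1..<length d + u + sumlen gs + 1]"]
  have r3: "rch (enat t) (d, [], [length d + 1..<length d + 1 + u] @ [length d + u + 1..<length d + u + sumlen gs + 1])
     ([], [], [1..<length d + 1] @ [length d + 1..<length d + 1 + u] @ [length d + u + 1..<length d + u + sumlen gs + 1])"
    by simp
  have e: "[1..<length d + 1] @ [length d + 1..<length d + 1 + u] @ [length d + u + 1..<length d + u + sumlen gs + 1]
     = [1..<n + 1]" unfolding n_def
    by (simp add: upt_app ac_simps del: upt_Suc)
  have "rch (enat t) (build x, [], []) ([], [], [1..<n + 1])"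
    using rtranclp_trans[OF rtranclp_trans[OF r1 r2] r3] unfolding x e[symmetric] u_def by simp
  then have "gsrt (enat t) (build x)" unfolding gsrt_def using sort_perm[OF perm] by simp
  then show "build x \<in> SS t" using perm unfolding SS_def by blast
  have gne: "gs \<noteq> []" using u1 unfolding u_def by auto
  show "build x \<noteq> []" unfolding x using blk_ne[OF gne] by simp
qed

lemma build_delta:
  assumes "x \<in> TT t"
  shows "takeWhile (\<lambda>y. y < hd (build x)) (rev (tl (build x))) = rev (snd x)"
    "hd (build x) = length (snd x) + length (fst x)"
proof -
  obtain gs d where x: "x = (gs, d)" by (cases x) auto
  have u1: "1 \<le> length gs" using assms unfolding x TT_def by auto
  have sub: "set gs \<subseteq> SS t" using assms unfolding x TT_def by auto
  have gsP: "\<forall>g\<in>set gs. g \<in> permutations_of_set {1..length g}"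
    using sub SS_perm by blast
  have g0: "\<forall>g\<in>set gs. 0 \<notin> set g" using gsP perm_0 by blast
  have dS: "d \<in> SS t" using assms unfolding x TT_def by auto
  have dP: "d \<in> permutations_of_set {1..length d}"
    using SS_perm[OF dS] by auto
  define B where "B = blk (length d + 1) (length d + length gs) gs"
  have Bne: "B \<noteq> []" unfolding B_def by (rule blk_ne) (use u1 in auto)
  have gne: "gs \<noteq> []" using u1 by auto
  have hB: "hd B = length d + length gs" unfolding B_def using hd_blk[OF gne] by simp
  show "hd (build x) = length (snd x) + length (fst x)" using Bne hB unfolding x build.simps B_def[symmetric] by simp
  have dlt: "\<forall>y\<in>set (rev d). y < hd (build x)"
    using dP Bne hB u1 unfolding x build.simps B_def[symmetric] by (auto simp: permutations_of_set_def)
  have tB: "takeWhile (\<lambda>y. y < hd B) (rev (tl B)) = []"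
  proof (cases "tl B = []")
    case False
    have "last gs \<noteq> []"
    proof
      assume "last gs = []"
      then have "gs = [[]]" using assms unfolding x TT_def by auto
      then have "tl B = []" unfolding B_def by simp
      then show False using False by simp
    qed
    then have "length d + length gs < last B" unfolding B_def using last_blk[OF gne _ g0] by blast
    moreover have "last (tl B) = last B" using False by (metis Bne last_tl)
    ultimately have "\<not> hd (rev (tl B)) < hd B" using hB False by (simp add: hd_rev)
    then show ?thesis using False by (cases "rev (tl B)") auto
  qed simp
  have "tl (build x) = tl B @ d" unfolding x build.simps B_def[symmetric] using Bne by simp
  then have "rev (tl (build x)) = rev d @ rev (tl B)" by simp
  then have "takeWhile (\<lambda>y. y < hd (build x)) (rev (tl (build x))) = rev d @ takeWhile (\<lambda>y. y < hd B) (rev (tl B))"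
  proof -
    have hh: "hd (build x) = hd B" using Bne unfolding x build.simps B_def[symmetric] by simp
    have "takeWhile (\<lambda>y. y < hd B) (rev d @ rev (tl B)) = rev d @ takeWhile (\<lambda>y. y < hd B) (rev (tl B))"
      by (rule takeWhile_append2) (use dlt hh in auto)
    then show ?thesis using hh \<open>rev (tl (build x)) = rev d @ rev (tl B)\<close> by simp
  qed
  then show "takeWhile (\<lambda>y. y < hd (build x)) (rev (tl (build x))) = rev (snd x)" using tB x by simp
qed

lemma build_inj: "inj_on build (TT t)"
proof (rule inj_onI)
  fix x y assume x: "x \<in> TT t" and y: "y \<in> TT t" and e: "build x = build y"
  obtain gs d where xe: "x = (gs, d)" by (cases x) auto
  obtain gs' d' where ye: "y = (gs', d')" by (cases y) auto
  have "rev d = rev d'" using build_delta(1)[OF x] build_delta(1)[OF y] e xe ye by simp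
  then have dd: "d = d'" by simp
  have "length d + length gs = length d' + length gs'" using build_delta(2)[OF x] build_delta(2)[OF y] e xe ye by simp
  then have ll: "length gs = length gs'" using dd by simp
  have "blk (length d + 1) (length d + length gs) gs = blk (length d + 1) (length d + length gs) gs'"
    using e xe ye dd ll by simp
  moreover have "\<forall>g\<in>set gs. 0 \<notin> set g" "\<forall>g\<in>set gs'. 0 \<notin> set g"
    using x y xe ye unfolding TT_def by (auto dest!: SS_perm perm_0)
  ultimately have "gs = gs'" using blk_inj[of gs gs' "length d + 1" "length d + length gs"] ll by simp
  then show "x = y" using xe ye dd by simp
qed

lemma pat4:
  assumes "gsrt T p" "distinct p" "p = A @ a # B @ b # C @ c # D @ d # E"
  shows "gsrt T [a, b, c, d]"
proof -
  define Q where "Q = (\<lambda>x. x \<in> {a, b, c, d})"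
  have d: "distinct (A @ a # B @ b # C @ c # D @ d # E)" using assms(2,3) by simp
  have "\<forall>x\<in>set A. \<not> Q x" "\<forall>x\<in>set B. \<not> Q x" "\<forall>x\<in>set C. \<not> Q x"
    "\<forall>x\<in>set D. \<not> Q x" "\<forall>x\<in>set E. \<not> Q x" using d unfolding Q_def by auto
  then have "filter Q A = []" "filter Q B = []" "filter Q C = []" "filter Q D = []" "filter Q E = []"
    by (simp_all add: filter_False)
  moreover have "Q a" "Q b" "Q c" "Q d" unfolding Q_def by auto
  ultimately have "filter Q p = [a, b, c, d]" using assms(3) by simp
  then have "filter (\<lambda>x. x \<in> {a, b, c, d}) p = [a, b, c, d]" unfolding Q_def .
  then show ?thesis using gsrt_filter[OF assms(1), of "\<lambda>x. x \<in> {a, b, c, d}"] by simp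
qed

lemma pat_contra:
  assumes "gsrt T xs" "distinct xs" "std xs = P" "\<not> decf (2 * length P) (sort P) P [] []"
  shows False
  using pat_bad[OF gsrt_std[OF assms(1,2)]] assms(3,4) by simp

lemma bad3124: "\<not> decf (2 * length [3,1,2,4]) (sort [3,1,2,4]) [3,1,2,4::nat] [] []"
  by (simp add: numeral_eq_Suc)
lemma bad3142: "\<not> decf (2 * length [3,1,4,2]) (sort [3,1,4,2]) [3,1,4,2::nat] [] []"
  by (simp add: numeral_eq_Suc)
lemma bad2314: "\<not> decf (2 * length [2,3,1,4]) (sort [2,3,1,4]) [2,3,1,4::nat] [] []"
  by (simp add: numeral_eq_Suc)

lemma std3124: "x < y \<Longrightarrow> y < m \<Longrightarrow> m < h \<Longrightarrow> std [m, x, y, h] = [3, 1, 2, 4]"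
  by (simp add: std_def rank_def)
lemma std3142: "l < z \<Longrightarrow> z < m \<Longrightarrow> m < h \<Longrightarrow> std [m, l, h, z] = [3, 1, 4, 2]"
  by (simp add: std_def rank_def)
lemma std2314: "l < m \<Longrightarrow> m < x \<Longrightarrow> x < y \<Longrightarrow> std [m, x, l, y] = [2, 3, 1, 4]"
  by (simp add: std_def rank_def)

lemma sw_filter:
  assumes "\<forall>A x B y C. xs = A @ x # B @ y # C \<longrightarrow> P x \<longrightarrow> P y \<longrightarrow> R x y"
  shows "sorted_wrt R (filter P xs)"
  using assms
proof (induction xs)
  case (Cons z zs)
  have IH: "sorted_wrt R (filter P zs)"
  proof (rule Cons.IH, intro allI impI)
    fix A x B y C assume "zs = A @ x # B @ y # C" "P x" "P y"
    then show "R x y" using Cons.prems[rule_format, of "z # A" x B y C] by simp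
  qed
  have "R z y" if "P z" "y \<in> set zs" "P y" for y
  proof -
    obtain B C where "zs = B @ y # C" using \<open>y \<in> set zs\<close> by (meson split_list)
    then show ?thesis using Cons.prems[rule_format, of "[]" z B y C] that by simp
  qed
  then show ?case using IH by auto
qed simp

lemma filter_infix: assumes "distinct (A @ g @ B)" shows "filter (\<lambda>x. x \<in> set g) (A @ g @ B) = g"
proof -
  have "filter (\<lambda>x. x \<in> set g) A = []" "filter (\<lambda>x. x \<in> set g) B = []"
    by (intro filter_False, use assms in auto)+
  moreover have "filter (\<lambda>x. x \<in> set g) g = g" by (simp add: filter_True)
  ultimately show ?thesis by simp
qed

lemma decomp:
  assumes t1: "1 \<le> t" and pS: "p \<in> SS t" and pne: "p \<noteq> []"
  shows "\<exists>x\<in>TT t. build x = p"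
proof -
  define n where "n = length p"
  have perm: "p \<in> permutations_of_set {1..n}" using SS_perm[OF pS] unfolding n_def .
  have setp: "set p = {1..n}" and dp: "distinct p" using perm by (auto simp: permutations_of_set_def)
  have gp: "gsrt (enat t) p" using SS_gsrt[OF pS] .
  obtain m rest where pm: "p = m # rest" using pne by (cases p) auto
  define dl where "dl = rev (takeWhile (\<lambda>x. x < m) (rev rest))"
  define X where "X = rev (dropWhile (\<lambda>x. x < m) (rev rest))"
  have "rest = X @ dl" unfolding X_def dl_def
    by (metis rev_append rev_rev_ident takeWhile_dropWhile_id)
  then have pe: "p = m # X @ dl" using pm by simp
  have dlt: "\<forall>x\<in>set dl. x < m" unfolding dl_def by (auto dest: set_takeWhileD)
  have dist: "m \<notin> set X" "m \<notin> set dl" "distinct X" "distinct dl" "set X \<inter> set dl = {}"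
    using dp pe by auto
  have mn: "1 \<le> m" "m \<le> n" using setp pe by auto
  have lastX: "m < last X" if "X \<noteq> []"
  proof -
    have ne: "dropWhile (\<lambda>x. x < m) (rev rest) \<noteq> []" using that unfolding X_def by simp
    have "last X = hd (dropWhile (\<lambda>x. x < m) (rev rest))" unfolding X_def by (simp add: last_rev)
    then have "\<not> last X < m" using hd_dropWhile[OF ne] by simp
    moreover have "last X \<noteq> m" using dist(1) that last_in_set by metis
    ultimately show ?thesis by simp
  qed
  have F1: "sorted_wrt (>) (filter (\<lambda>x. x < m) X)"
  proof (rule sw_filter, intro allI impI)
    fix A x B y C assume XA: "X = A @ x # B @ y # C" and xm: "x < m" and ym: "y < m"
    show "y < x"
    proof (rule ccontr)
      assume "\<not> y < x"
      moreover have "x \<noteq> y" using dist(3) XA by auto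
      ultimately have xy: "x < y" by simp
      have Xne: "X \<noteq> []" using XA by simp
      have "C \<noteq> []" using lastX[OF Xne] XA ym by auto
      then obtain C' h where C: "C = C' @ [h]" by (metis append_butlast_last_id)
      have hX: "h = last X" using XA C by simp
      have mh: "m < h" using lastX[OF Xne] hX by simp
      have "p = [] @ m # A @ x # B @ y # C' @ h # dl" using pe XA C by simp
      from pat4[OF gp dp this] have "gsrt (enat t) [m, x, y, h]" .
      moreover have "distinct [m, x, y, h]" using xy ym mh by auto
      ultimately show False using pat_contra std3124[OF xy ym mh] bad3124 by blast
    qed
  qed
  have F2: "z \<in> set X" if lX: "l \<in> set X" and lm: "l < m" and lz: "l < z" and zm: "z < m" for l z
  proof (rule ccontr)
    assume zX: "z \<notin> set X"
    have "l \<in> set p" using lX pe by simp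
    then have "1 \<le> l" using setp by auto
    then have "z \<in> set p" using setp lz zm mn by auto
    then have zd: "z \<in> set dl" using zX zm pe by auto
    have Xne: "X \<noteq> []" using lX by auto
    obtain A B where XA: "X = A @ l # B" using lX by (meson split_list)
    have "B \<noteq> []" using lastX[OF Xne] XA lm by auto
    then obtain B' h where B: "B = B' @ [h]" by (metis append_butlast_last_id)
    have mh: "m < h" using lastX[OF Xne] XA B by simp
    obtain C D where dC: "dl = C @ z # D" using zd by (meson split_list)
    have "p = [] @ m # A @ l # B' @ h # C @ z # D" using pe XA B dC by simp
    from pat4[OF gp dp this] have "gsrt (enat t) [m, l, h, z]" .
    moreover have "distinct [m, l, h, z]" using lz zm mh by auto
    ultimately show False using pat_contra std3142[OF lz zm mh] bad3142 by blast
  qed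
  have F3: "\<forall>A x B l C y D. X = A @ x # B @ l # C @ y # D \<longrightarrow> m < x \<longrightarrow> \<not> m < l \<longrightarrow> m < y \<longrightarrow> y < x"
  proof (intro allI impI)
    fix A x B l C y D assume XA: "X = A @ x # B @ l # C @ y # D" and mx: "m < x" and ml: "\<not> m < l" and my: "m < y"
    have "l \<noteq> m" using dist(1) XA by auto
    then have lm: "l < m" using ml by simp
    show "y < x"
    proof (rule ccontr)
      assume "\<not> y < x"
      moreover have "x \<noteq> y" using dist(3) XA by auto
      ultimately have xy: "x < y" by simp
      have "p = [] @ m # A @ x # B @ l # C @ y # (D @ dl)" using pe XA by simp
      from pat4[OF gp dp this] have "gsrt (enat t) [m, x, l, y]" .
      moreover have "distinct [m, x, l, y]" using lm mx xy by auto
      ultimately show False using pat_contra std2314[OF lm mx xy] bad2314 by blast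
    qed
  qed
  define Lam where "Lam = set (filter (\<lambda>x. x < m) X)"
  define a where "a = (if Lam = {} then m else Min Lam)"
  have finL: "finite Lam" unfolding Lam_def by simp
  have Lam_eq: "Lam = {a..<m}"
  proof (cases "Lam = {}")
    case True then show ?thesis unfolding a_def by simp
  next
    case False
    have aL: "a \<in> Lam" unfolding a_def using False finL by simp
    show ?thesis
    proof
      show "Lam \<subseteq> {a..<m}" unfolding a_def using False finL by (auto simp: Lam_def)
      show "{a..<m} \<subseteq> Lam"
      proof
        fix z assume z: "z \<in> {a..<m}"
        show "z \<in> Lam"
        proof (cases "z = a")
          case False
          then have "a < z" using z by simp
          moreover have "a \<in> set X" "a < m" using aL unfolding Lam_def by auto
          ultimately have "z \<in> set X" using F2 z by auto
          then show ?thesis using z unfolding Lam_def by simp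
        qed (use aL in simp)
      qed
    qed
  qed
  have am: "a \<le> m"
  proof (cases "Lam = {}")
    case False
    then have "a \<in> Lam" unfolding a_def using finL by simp
    then show ?thesis unfolding Lam_def by simp
  qed (simp add: a_def)
  have a1: "1 \<le> a"
  proof (cases "Lam = {}")
    case False
    then have "a \<in> Lam" unfolding a_def using finL by simp
    then have "a \<in> set p" unfolding Lam_def using pe by auto
    then show ?thesis using setp by auto
  qed (use mn in \<open>simp add: a_def\<close>)
  have fL: "filter (\<lambda>x. x < m) X = rev [a..<m]"
  proof -
    have s1: "sorted_wrt (<) (rev (filter (\<lambda>x. x < m) X))" using F1 by (simp add: sorted_wrt_rev)
    have s2: "sorted_wrt (<) [a..<m]" by (simp add: sorted_wrt_upt)
    have "set [a..<m] = set (rev (filter (\<lambda>x. x < m) X))" using Lam_eq unfolding Lam_def by simp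
    then have "rev (filter (\<lambda>x. x < m) X) = [a..<m]" using strict_sorted_equal[OF s2 s1] by simp
    then show ?thesis by (metis rev_rev_ident)
  qed
  have fL': "filter (\<lambda>x. \<not> m < x) X = rev [a..<m]"
  proof -
    have "filter (\<lambda>x. \<not> m < x) X = filter (\<lambda>x. x < m) X"
      by (rule filter_cong) (use dist(1) in \<open>auto simp: not_less order.order_iff_strict\<close>)
    then show ?thesis using fL by simp
  qed
  define u where "u = m - a + 1"
  have Xge: "a \<le> x" if "x \<in> set X" for x
  proof (cases "x < m")
    case True
    then have "x \<in> Lam" unfolding Lam_def using that by simp
    then show ?thesis using Lam_eq by simp
  next
    case False then show ?thesis using am by simp
  qed
  have dlset: "set dl = {1..<a}"
  proof
    show "set dl \<subseteq> {1..<a}"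
    proof
      fix x assume x: "x \<in> set dl"
      have "x \<in> set p" using x pe by simp
      then have "1 \<le> x" using setp by auto
      moreover have "x < m" using dlt x by simp
      moreover have "x \<notin> set X" using dist(5) x by auto
      ultimately have "x \<notin> Lam" unfolding Lam_def by simp
      then show "x \<in> {1..<a}" using Lam_eq \<open>1 \<le> x\<close> \<open>x < m\<close> by auto
    qed
    show "{1..<a} \<subseteq> set dl"
    proof
      fix x assume x: "x \<in> {1..<a}"
      then have "x \<in> set p" using setp am mn by auto
      moreover have "x \<noteq> m" using x am by auto
      moreover have "x \<notin> set X" using Xge x by fastforce
      ultimately show "x \<in> set dl" using pe by auto
    qed
  qed
  have lendl: "length dl = a - 1" using distinct_card[OF dist(4)] dlset by simp
  have dlperm: "dl \<in> permutations_of_set {1..length dl}"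
    using dlset dist(4) lendl a1 by (auto simp: permutations_of_set_def)
  have "filter (\<lambda>x. x < a) p = dl"
  proof -
    have "filter (\<lambda>x. x < a) X = []" using Xge by (force simp: filter_empty_conv)
    moreover have "filter (\<lambda>x. x < a) dl = dl" using dlset by (auto simp: filter_id_conv)
    ultimately show ?thesis using pe am by simp
  qed
  then have "gsrt (enat t) dl" using gsrt_filter[OF gp, of "\<lambda>x. x < a"] by simp
  then have dlS: "dl \<in> SS t" using dlperm unfolding SS_def by blast
  have Hset: "set (filter (\<lambda>x. m < x) X) = {m<..m + (n - m)}"
  proof
    show "set (filter (\<lambda>x. m < x) X) \<subseteq> {m<..m + (n - m)}" using setp pe mn by auto
    show "{m<..m + (n - m)} \<subseteq> set (filter (\<lambda>x. m < x) X)"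
    proof
      fix x assume x: "x \<in> {m<..m + (n - m)}"
      then have "x \<in> set p" using setp mn by auto
      moreover have "x \<notin> set dl" using dlt x by auto
      ultimately show "x \<in> set (filter (\<lambda>x. m < x) X)" using pe x by auto
    qed
  qed
  have shp: "m # X = blk a m (map std (splitL m X))"
    by (rule shape[OF dist(3) fL' am Hset F3])
  define gs where "gs = map std (splitL m X)"
  have lgs: "length gs = u"
    unfolding gs_def u_def using splitL_len[of m X] fL' by simp
  have ut: "u \<le> t"
  proof (cases "X = []")
    case True
    then have "Lam = {}" unfolding Lam_def by simp
    then show ?thesis unfolding u_def a_def using t1 by simp
  next
    case False
    define h where "h = last X"
    have mh: "m < h" using lastX[OF False] unfolding h_def .
    obtain X' where XX: "X = X' @ [h]" unfolding h_def using False by (metis append_butlast_last_id)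
    define P where "P = (\<lambda>x. (a \<le> x \<and> x \<le> m) \<or> x = h)"
    have hX': "h \<notin> set X'" using dist(3) XX by simp
    have "filter P X' = filter (\<lambda>x. x < m) X'"
    proof (rule filter_cong)
      fix x assume x: "x \<in> set X'"
      then have xX: "x \<in> set X" using XX by simp
      have "x \<noteq> h" using x hX' by auto
      moreover have "x \<noteq> m" using dist(1) xX by auto
      ultimately show "P x = (x < m)" unfolding P_def using Xge[OF xX] by auto
    qed simp
    also have "\<dots> = filter (\<lambda>x. x < m) X" using XX mh by simp
    finally have fX': "filter P X' = rev [a..<m]" using fL by simp
    have "filter P dl = []" using dlset mh am unfolding P_def by (auto simp: filter_empty_conv)
    then have "filter P p = m # rev [a..<m] @ [h]" using pe XX fX' am mh unfolding P_def by simp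
    also have "\<dots> = rev [a..<Suc m] @ [h]" using am by simp
    finally have gq: "gsrt (enat t) (rev [a..<Suc m] @ [h])" using gsrt_filter[OF gp, of P] by simp
    have dq: "distinct (rev [a..<Suc m] @ [h])" using mh by simp
    define f where "f = (\<lambda>x. if x \<le> m then x + 1 - a else Suc u)"
    have smf: "strict_mono_on (set (rev [a..<Suc m] @ [h])) f"
    proof (rule strict_mono_onI)
      fix x y assume "x \<in> set (rev [a..<Suc m] @ [h])" "y \<in> set (rev [a..<Suc m] @ [h])" "x < y"
      then show "f x < f y" unfolding f_def u_def using mh by auto
    qed
    have "gsrt (enat t) (map f (rev [a..<Suc m] @ [h]))" by (rule gsrt_map[OF gq dq smf])
    moreover have "map f (rev [a..<Suc m] @ [h]) = rev [1..<u + 1] @ [Suc u]"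
    proof -
      have e1: "[a..<Suc m] = map (\<lambda>x. x + (a - 1)) [1..<u + 1]"
        unfolding map_plus_upt u_def using a1 am by (simp del: upt_Suc)
      have e2: "map f [a..<Suc m] = [1..<u + 1]"
        unfolding e1 map_map comp_def
        by (rule map_idI) (use a1 am in \<open>auto simp: f_def u_def\<close>)
      have "f h = Suc u" unfolding f_def using mh by simp
      then show ?thesis using e2 by (simp add: rev_map[symmetric] del: upt_Suc)
    qed
    ultimately show ?thesis using Q_bad by simp
  qed
  have gsS: "set gs \<subseteq> SS t"
  proof
    fix g assume "g \<in> set gs"
    then obtain g0 where g0: "g0 \<in> set (splitL m X)" "g = std g0" unfolding gs_def by auto
    obtain A B where "X = A @ g0 @ B" using splitL_infix[OF g0(1)] by blast
    then have pA: "p = (m # A) @ g0 @ (B @ dl)" using pe by simp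
    then have "filter (\<lambda>x. x \<in> set g0) p = g0" using filter_infix dp by metis
    then have gg: "gsrt (enat t) g0" using gsrt_filter[OF gp, of "\<lambda>x. x \<in> set g0"] by simp
    have dg: "distinct g0" using dp pA by simp
    have "gsrt (enat t) g" "g \<in> permutations_of_set {1..length g}"
      using gsrt_std[OF gg dg] std_perm[OF dg] g0(2) by auto
    then show "g \<in> SS t" unfolding SS_def by blast
  qed
  have canon: "last gs \<noteq> [] \<or> gs = [[]]"
  proof (cases "X = []")
    case True then show ?thesis unfolding gs_def by (simp add: splitL_nil std_def)
  next
    case False
    have "last (splitL m X) \<noteq> []" using splitL_last[OF False lastX[OF False]] .
    moreover have "splitL m X \<noteq> []" using splitL_len[of m X] by auto
    moreover have "std (last (splitL m X)) \<noteq> []"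
      using calculation(1) by (metis length_0_conv length_std)
    ultimately show ?thesis unfolding gs_def by (simp add: last_map)
  qed
  have xT: "(gs, dl) \<in> TT t" unfolding TT_def using lgs ut gsS dlS canon u_def by auto
  have "build (gs, dl) = blk a m gs @ dl"
    using lendl lgs a1 am unfolding u_def by simp
  also have "\<dots> = p" using shp pe unfolding gs_def by simp
  finally show ?thesis using xT by blast
qed

definition lvl :: "'a set \<Rightarrow> ('a \<Rightarrow> nat) \<Rightarrow> nat \<Rightarrow> 'a set" where
  "lvl A w n = {x \<in> A. w x = n}"

definition lfin :: "'a set \<Rightarrow> ('a \<Rightarrow> nat) \<Rightarrow> bool" where
  "lfin A w \<longleftrightarrow> (\<forall>n. finite (lvl A w n))"

definition W :: "'a set \<Rightarrow> ('a \<Rightarrow> nat) \<Rightarrow> int fps" where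
  "W A w = Abs_fps (\<lambda>n. int (card (lvl A w n)))"

lemma W_nth: "fps_nth (W A w) n = int (card (lvl A w n))"
  unfolding W_def by simp

lemma W_cong: assumes "\<And>x. x \<in> A \<Longrightarrow> w x = w' x" shows "W A w = W A w'"
proof -
  have "lvl A w n = lvl A w' n" for n unfolding lvl_def using assms by auto
  then show ?thesis unfolding W_def by simp
qed

lemma lfin_cong: assumes "\<And>x. x \<in> A \<Longrightarrow> w x = w' x" "lfin A w" shows "lfin A w'"
proof -
  have "lvl A w n = lvl A w' n" for n unfolding lvl_def using assms(1) by auto
  then show ?thesis using assms(2) unfolding lfin_def by simp
qed

lemma lfin_subset: assumes "lfin A w" "B \<subseteq> A" shows "lfin B w"
proof -
  have "lvl B w n \<subseteq> lvl A w n" for n unfolding lvl_def using assms(2) by auto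
  then show ?thesis using assms(1) unfolding lfin_def by (meson finite_subset)
qed

abbreviation pairs :: "'a set \<Rightarrow> 'b set \<Rightarrow> ('a \<times> 'b) set" where
  "pairs A B \<equiv> A \<times> B"

lemma lvl_pair:
  "lvl (A \<times> B) (\<lambda>(a, b). wa a + wb b) n = (\<Union>i\<in>{0..n}. lvl A wa i \<times> lvl B wb (n - i))"
  unfolding lvl_def by auto

lemma lfin_pair:
  assumes "lfin A wa" "lfin B wb"
  shows "lfin (A \<times> B) (\<lambda>(a, b). wa a + wb b)"
  unfolding lfin_def lvl_pair using assms unfolding lfin_def by auto

lemma card_lvl_pair:
  assumes "lfin A wa" "lfin B wb"
  shows "card (lvl (A \<times> B) (\<lambda>(a, b). wa a + wb b) n) = (\<Sum>i=0..n. card (lvl A wa i) * card (lvl B wb (n - i)))"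
proof -
  have "card (\<Union>i\<in>{0..n}. lvl A wa i \<times> lvl B wb (n - i)) = (\<Sum>i=0..n. card (lvl A wa i \<times> lvl B wb (n - i)))"
  proof (rule card_UN_disjoint)
    show "finite {0..n}" by simp
    show "\<forall>i\<in>{0..n}. finite (lvl A wa i \<times> lvl B wb (n - i))" using assms unfolding lfin_def by auto
    show "\<forall>i\<in>{0..n}. \<forall>j\<in>{0..n}. i \<noteq> j \<longrightarrow> (lvl A wa i \<times> lvl B wb (n - i)) \<inter> (lvl A wa j \<times> lvl B wb (n - j)) = {}"
      unfolding lvl_def by auto
  qed
  then show ?thesis unfolding lvl_pair by (simp add: card_cartesian_product)
qed

lemma W_pair:
  assumes "lfin A wa" "lfin B wb"
  shows "W (A \<times> B) (\<lambda>(a, b). wa a + wb b) = W A wa * W B wb"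
proof (rule fps_ext)
  fix n
  show "fps_nth (W (A \<times> B) (\<lambda>(a, b). wa a + wb b)) n = fps_nth (W A wa * W B wb) n"
    unfolding fps_mult_nth W_nth card_lvl_pair[OF assms] by (simp add: of_nat_sum)
qed

lemma lvl_image: "inj_on h A \<Longrightarrow> lvl (h ` A) w n = h ` lvl A (w \<circ> h) n"
  unfolding lvl_def by auto

lemma W_image: "inj_on h A \<Longrightarrow> W (h ` A) w = W A (w \<circ> h)"
proof -
  assume inj: "inj_on h A"
  have "card (lvl (h ` A) w n) = card (lvl A (w \<circ> h) n)" for n
    unfolding lvl_image[OF inj] by (rule card_image) (rule inj_on_subset[OF inj], auto simp: lvl_def)
  then show ?thesis unfolding W_def by simp
qed

lemma lfin_image: assumes "inj_on h A" "lfin A (w \<circ> h)" shows "lfin (h ` A) w"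
  unfolding lfin_def lvl_image[OF assms(1)] using assms(2) unfolding lfin_def by simp

lemma W_union:
  assumes "A \<inter> B = {}" "lfin A w" "lfin B w"
  shows "W (A \<union> B) w = W A w + W B w" "lfin (A \<union> B) w"
proof -
  have l: "lvl (A \<union> B) w n = lvl A w n \<union> lvl B w n" for n unfolding lvl_def by auto
  have "card (lvl (A \<union> B) w n) = card (lvl A w n) + card (lvl B w n)" for n
    unfolding l using assms unfolding lfin_def by (intro card_Un_disjoint) (auto simp: lvl_def)
  then show "W (A \<union> B) w = W A w + W B w" unfolding W_def by (simp add: fps_eq_iff)
  show "lfin (A \<union> B) w" using assms unfolding lfin_def l by auto
qed

lemma W_shift: "W A (\<lambda>x. k + w x) = fps_X ^ k * W A w"
proof (rule fps_ext)
  fix n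
  have "lvl A (\<lambda>x. k + w x) n = (if n < k then {} else lvl A w (n - k))" unfolding lvl_def by auto
  then show "fps_nth (W A (\<lambda>x. k + w x)) n = fps_nth (fps_X ^ k * W A w) n"
    unfolding W_nth fps_X_power_mult_nth by (simp add: W_nth)
qed

lemma lfin_shift: "lfin A w \<Longrightarrow> lfin A (\<lambda>x. k + w x)"
proof -
  assume a: "lfin A w"
  have "lvl A (\<lambda>x. k + w x) n = (if n < k then {} else lvl A w (n - k))" for n unfolding lvl_def by auto
  then show ?thesis using a unfolding lfin_def by auto
qed

lemma W_single: "W {x} w = fps_X ^ w x"
proof (rule fps_ext)
  fix n
  have "lvl {x} w n = (if n = w x then {x} else {})" unfolding lvl_def by auto
  then show "fps_nth (W {x} w) n = fps_nth (fps_X ^ w x) n"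
    unfolding W_nth by (simp add: fps_X_power_nth)
qed

lemma lfin_single: "lfin {x} w"
  unfolding lfin_def lvl_def by auto

definition Lst :: "nat list set \<Rightarrow> nat \<Rightarrow> nat list list set" where
  "Lst S j = {xs. set xs \<subseteq> S \<and> length xs = j}"

definition Lt :: "nat list set \<Rightarrow> nat \<Rightarrow> nat list list set" where
  "Lt S t = {xs. set xs \<subseteq> S \<and> length xs < t}"

definition wl :: "nat list list \<Rightarrow> nat" where
  "wl xs = length xs + sumlen xs"

lemma Lst_Suc: "Lst S (Suc j) = (\<lambda>(x, xs). x # xs) ` (S \<times> Lst S j)"
proof
  show "Lst S (Suc j) \<subseteq> (\<lambda>(x, xs). x # xs) ` (S \<times> Lst S j)"
  proof
    fix ys assume "ys \<in> Lst S (Suc j)"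
    then obtain x xs where "ys = x # xs" "x \<in> S" "xs \<in> Lst S j" unfolding Lst_def by (cases ys) auto
    then show "ys \<in> (\<lambda>(x, xs). x # xs) ` (S \<times> Lst S j)" by force
  qed
  show "(\<lambda>(x, xs). x # xs) ` (S \<times> Lst S j) \<subseteq> Lst S (Suc j)" unfolding Lst_def by auto
qed

lemma W_Lst:
  assumes "lfin S length"
  shows "W (Lst S j) wl = (fps_X * W S length) ^ j \<and> lfin (Lst S j) wl"
proof (induction j)
  case 0
  have "Lst S 0 = {[]}" unfolding Lst_def by auto
  moreover have "wl [] = 0" by (simp add: wl_def)
  ultimately show ?case using W_single[of "[]" wl] lfin_single[of "[]" wl] by simp
next
  case (Suc j)
  have inj: "inj_on (\<lambda>(x, xs). x # xs) (S \<times> Lst S j)" by (auto simp: inj_on_def)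
  have wc: "(wl \<circ> (\<lambda>(x, xs). x # xs)) p = 1 + (\<lambda>(a, b). length a + wl b) p" for p :: "nat list \<times> nat list list"
    by (cases p) (simp add: wl_def)
  have lp: "lfin (S \<times> Lst S j) (\<lambda>(a, b). length a + wl b)" using lfin_pair assms Suc by blast
  have "W (Lst S (Suc j)) wl = W (S \<times> Lst S j) (wl \<circ> (\<lambda>(x, xs). x # xs))"
    unfolding Lst_Suc by (rule W_image[OF inj])
  also have "\<dots> = W (S \<times> Lst S j) (\<lambda>p. 1 + (\<lambda>(a, b). length a + wl b) p)"
    by (rule W_cong) (simp only: wc)
  also have "\<dots> = fps_X ^ 1 * (W S length * W (Lst S j) wl)"
    by (simp only: W_shift W_pair[OF assms] Suc[THEN conjunct2])
  also have "\<dots> = (fps_X * W S length) ^ Suc j" using Suc by (simp add: algebra_simps)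
  finally have 1: "W (Lst S (Suc j)) wl = (fps_X * W S length) ^ Suc j" .
  have "lfin (S \<times> Lst S j) (wl \<circ> (\<lambda>(x, xs). x # xs))"
    by (rule lfin_cong[OF _ lfin_shift[OF lp, of 1]]) (simp only: wc)
  then have "lfin (Lst S (Suc j)) wl" unfolding Lst_Suc by (rule lfin_image[OF inj])
  with 1 show ?case by blast
qed

lemma W_Lt:
  assumes "lfin S length"
  shows "W (Lt S t) wl = (\<Sum>j<t. (fps_X * W S length) ^ j) \<and> lfin (Lt S t) wl"
proof (induction t)
  case 0
  have "Lt S 0 = {}" unfolding Lt_def by auto
  then show ?case unfolding W_def lfin_def lvl_def by (simp add: fps_zero_def)
next
  case (Suc t)
  have "Lt S (Suc t) = Lt S t \<union> Lst S t" unfolding Lt_def Lst_def by auto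
  moreover have "Lt S t \<inter> Lst S t = {}" unfolding Lt_def Lst_def by auto
  ultimately show ?case using W_union[of "Lt S t" "Lst S t" wl] Suc W_Lst[OF assms, of t] by simp
qed

lemma sum_shift_pow: "(\<Sum>u = 1..t. (y::'a::comm_ring_1) ^ u) = y * (\<Sum>j<t. y ^ j)"
  by (induction t) (auto simp: sum.atLeast_Suc_atMost algebra_simps)

lemma key1:
  fixes g x :: "'a::comm_ring_1"
  assumes "1 \<le> t"
  shows "(g - x) * (\<Sum>u = 1..t. g ^ u) = g ^ (t + 1) + (1 - x) * (\<Sum>i = 2..t. g ^ i) - x * g"
  using assms
proof (induction t rule: dec_induct)
  case base
  then show ?case by (simp add: power2_eq_square algebra_simps)
next
  case (step n)
  have s1: "(\<Sum>u = 1..Suc n. g ^ u) = (\<Sum>u = 1..n. g ^ u) + g ^ Suc n" using step by simp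
  have s2: "(\<Sum>i = 2..Suc n. g ^ i) = (\<Sum>i = 2..n. g ^ i) + g ^ Suc n"
  proof (cases "n = 1")
    case True then show ?thesis by simp
  next
    case False then show ?thesis using step by simp
  qed
  show ?case unfolding s1 s2 using step.IH by (simp add: algebra_simps)
qed

lemma key2:
  fixes g :: "'a::comm_ring_1"
  assumes "1 \<le> t"
  shows "(\<Sum>i = 2..t. g ^ i) * (g - 1) = g ^ (t + 1) - g ^ 2"
  using assms
proof (induction t rule: dec_induct)
  case base
  then show ?case by (simp add: power2_eq_square algebra_simps)
next
  case (step n)
  have s2: "(\<Sum>i = 2..Suc n. g ^ i) = (\<Sum>i = 2..n. g ^ i) + g ^ Suc n"
  proof (cases "n = 1")
    case True then show ?thesis by simp
  next
    case False then show ?thesis using step by simp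
  qed
  show ?case unfolding s2 using step.IH by (simp add: algebra_simps)
qed

lemma alg_all:
  fixes f x :: "'a::comm_ring_1"
  assumes t: "1 \<le> t" and E: "f = 1 + x * f + (f - 1) * (\<Sum>u = 1..t. x ^ u * f ^ u)"
  defines "g \<equiv> x * f"
  shows "g ^ (t + 1) + (1 - x) * (\<Sum>i = 2..t. g ^ i) - g + x = 0"
    "x * (- (g ^ (t + 1)) + g ^ 2 + g - 1) + (g ^ (t + 2) - 2 * g ^ 2 + g) = 0"
proof -
  have "(\<Sum>u = 1..t. x ^ u * f ^ u) = (\<Sum>u = 1..t. g ^ u)" unfolding g_def by (simp add: power_mult_distrib)
  then have "x * f = x * (1 + x * f + (f - 1) * (\<Sum>u = 1..t. g ^ u))" using E by simp
  then have "g = x + x * g + (g - x) * (\<Sum>u = 1..t. g ^ u)" unfolding g_def by (simp add: algebra_simps)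
  moreover have k: "(g - x) * (\<Sum>u = 1..t. g ^ u) = g ^ (t + 1) + (1 - x) * (\<Sum>i = 2..t. g ^ i) - x * g"
    by (rule key1[OF t])
  ultimately have "g = x + x * g + (g ^ (t + 1) + (1 - x) * (\<Sum>i = 2..t. g ^ i) - x * g)" by simp
  then show E2: "g ^ (t + 1) + (1 - x) * (\<Sum>i = 2..t. g ^ i) - g + x = 0" by (simp add: algebra_simps)
  have "x * (- (g ^ (t + 1)) + g ^ 2 + g - 1) + (g ^ (t + 2) - 2 * g ^ 2 + g)
      = (g - 1) * (g ^ (t + 1) + (1 - x) * (\<Sum>i = 2..t. g ^ i) - g + x)"
  proof -
    have "(g - 1) * ((1 - x) * (\<Sum>i = 2..t. g ^ i)) = (1 - x) * ((\<Sum>i = 2..t. g ^ i) * (g - 1))"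
      by (simp only: ac_simps)
    also have "\<dots> = (1 - x) * (g ^ (t + 1) - g ^ 2)" using key2[OF t, of g] by simp
    finally have "(g - 1) * ((1 - x) * (\<Sum>i = 2..t. g ^ i)) = (1 - x) * (g ^ (t + 1) - g ^ 2)" .
    then show ?thesis by (simp add: algebra_simps power2_eq_square)
  qed
  then show "x * (- (g ^ (t + 1)) + g ^ 2 + g - 1) + (g ^ (t + 2) - 2 * g ^ 2 + g) = 0" using E2 by simp
qed

lemma lfin_SS: "lfin (SS t) length"
proof -
  have "lvl (SS t) length n \<subseteq> permutations_of_set {1..n}" for n
    unfolding lvl_def using SS_perm by auto
  then show ?thesis unfolding lfin_def by (meson finite_permutations_of_set finite_subset)
qed

lemma Nil_SS: "[] \<in> SS t"
  unfolding SS_def gsrt_def by (auto intro!: exI[of _ 0])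

lemma f_W: "f_gf t = W (SS t) length"
proof -
  have "{\<pi> \<in> permutations_of_set {1..n}. \<pi> \<in> \<F> 1 (enat t)} = lvl (SS t) length n" for n
  proof
    show "{\<pi> \<in> permutations_of_set {1..n}. \<pi> \<in> \<F> 1 (enat t)} \<subseteq> lvl (SS t) length n"
    proof
      fix p assume p: "p \<in> {\<pi> \<in> permutations_of_set {1..n}. \<pi> \<in> \<F> 1 (enat t)}"
      then have pp: "p \<in> permutations_of_set {1..n}" and len: "length p = n" using length_perm by auto
      have "gsrt (enat t) p" using p sort_perm[OF pp] len
        unfolding forkstack_class_def fs_sortable_def gsrt_def by (simp del: upt_Suc)
      then show "p \<in> lvl (SS t) length n" using pp len unfolding lvl_def SS_def by blast
    qed
    show "lvl (SS t) length n \<subseteq> {\<pi> \<in> permutations_of_set {1..n}. \<pi> \<in> \<F> 1 (enat t)}"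
    proof
      fix p assume p: "p \<in> lvl (SS t) length n"
      then have pS: "p \<in> SS t" and len: "length p = n" unfolding lvl_def by auto
      have pp: "p \<in> permutations_of_set {1..n}" using SS_perm[OF pS] len by simp
      have "fs_sortable 1 (enat t) p" using SS_gsrt[OF pS] sort_perm[OF pp] len
        unfolding fs_sortable_def gsrt_def by (simp del: upt_Suc)
      then show "p \<in> {\<pi> \<in> permutations_of_set {1..n}. \<pi> \<in> \<F> 1 (enat t)}"
        using pp unfolding forkstack_class_def by simp
    qed
  qed
  then show ?thesis unfolding f_gf_def W_def c_count_def by simp
qed

lemma W_minus: "W (SS t - {[]}) length = W (SS t) length - 1"
proof -
  have U: "{[]} \<union> (SS t - {[]}) = SS t" using Nil_SS by auto
  have l: "lfin (SS t - {[]}) length" by (rule lfin_subset[OF lfin_SS]) auto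
  have disj: "{[]} \<inter> (SS t - {[]}) = {}" by auto
  have "W (SS t) length = W {[]::nat list} length + W (SS t - {[]}) length"
    using W_union(1)[OF disj lfin_single l] unfolding U .
  then show ?thesis using W_single[of "[]::nat list" length] by simp
qed

definition wt :: "nat list list \<times> nat list \<Rightarrow> nat" where
  "wt x = length (fst x) + sumlen (fst x) + length (snd x)"

definition P1 :: "nat \<Rightarrow> (nat list list \<times> nat list) set" where
  "P1 t = (\<lambda>d. ([[]], d)) ` SS t"

definition hR :: "nat list list \<times> nat list \<times> nat list \<Rightarrow> nat list list \<times> nat list" where
  "hR p = (fst p @ [fst (snd p)], snd (snd p))"

definition RR :: "nat \<Rightarrow> (nat list list \<times> nat list) set" where
  "RR t = hR ` (Lt (SS t) t \<times> ((SS t - {[]}) \<times> SS t))"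

lemma TT_eq: assumes "1 \<le> t" shows "TT t = P1 t \<union> RR t"
proof
  show "TT t \<subseteq> P1 t \<union> RR t"
  proof
    fix x assume x: "x \<in> TT t"
    obtain gs d where xe: "x = (gs, d)" by (cases x) auto
    have props: "1 \<le> length gs" "length gs \<le> t" "set gs \<subseteq> SS t" "d \<in> SS t" "last gs \<noteq> [] \<or> gs = [[]]"
      using x unfolding xe TT_def by auto
    show "x \<in> P1 t \<union> RR t"
    proof (cases "gs = [[]]")
      case True then show ?thesis using props xe unfolding P1_def by auto
    next
      case False
      then have lg: "last gs \<noteq> []" using props by simp
      have gne: "gs \<noteq> []" using props by auto
      have ge: "gs = butlast gs @ [last gs]" using gne by simp
      have "butlast gs \<in> Lt (SS t) t" unfolding Lt_def using props gne
        by (auto dest: in_set_butlastD)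
      moreover have "last gs \<in> SS t - {[]}" using props lg gne by auto
      ultimately have "(butlast gs, last gs, d) \<in> Lt (SS t) t \<times> ((SS t - {[]}) \<times> SS t)" using props by simp
      moreover have "hR (butlast gs, last gs, d) = x" unfolding hR_def xe using ge by simp
      ultimately show ?thesis unfolding RR_def by (metis UnI2 image_eqI)
    qed
  qed
  show "P1 t \<union> RR t \<subseteq> TT t"
  proof
    fix x assume "x \<in> P1 t \<union> RR t"
    then consider "x \<in> P1 t" | "x \<in> RR t" by blast
    then show "x \<in> TT t"
    proof cases
      case 1 then show ?thesis unfolding P1_def TT_def using assms Nil_SS by auto
    next
      case 2
      then obtain q where q: "q \<in> Lt (SS t) t \<times> ((SS t - {[]}) \<times> SS t)" "x = hR q"
        unfolding RR_def by blast
      obtain xs g d where "q = (xs, g, d)" by (cases q) auto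
      then have "x = (xs @ [g], d)" "xs \<in> Lt (SS t) t" "g \<in> SS t" "g \<noteq> []" "d \<in> SS t"
        using q unfolding hR_def by auto
      then show ?thesis unfolding TT_def Lt_def by auto
    qed
  qed
qed

lemma P1_RR_disj: "P1 t \<inter> RR t = {}"
  unfolding P1_def RR_def hR_def by auto

lemma W_P1: "W (P1 t) wt = fps_X * W (SS t) length \<and> lfin (P1 t) wt"
proof -
  have inj: "inj_on (\<lambda>d. ([[]], d)) (SS t)" by (auto simp: inj_on_def)
  have wc: "(wt \<circ> (\<lambda>d. ([[]], d))) d = 1 + length d" for d by (simp add: wt_def)
  have "W (P1 t) wt = W (SS t) (wt \<circ> (\<lambda>d. ([[]], d)))" unfolding P1_def by (rule W_image[OF inj])
  also have "\<dots> = W (SS t) (\<lambda>d. 1 + length d)" by (rule W_cong) (simp only: wc)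
  also have "\<dots> = fps_X * W (SS t) length" using W_shift[of "SS t" 1 length] by simp
  finally have 1: "W (P1 t) wt = fps_X * W (SS t) length" .
  have "lfin (SS t) (wt \<circ> (\<lambda>d. ([[]], d)))"
    by (rule lfin_cong[OF _ lfin_shift[OF lfin_SS, where k=1]]) (simp only: wc)
  then have "lfin (P1 t) wt" unfolding P1_def by (rule lfin_image[OF inj])
  with 1 show ?thesis by blast
qed

lemma W_RR: "W (RR t) wt = fps_X * (W (Lt (SS t) t) wl * (W (SS t - {[]}) length * W (SS t) length))
    \<and> lfin (RR t) wt"
proof -
  define A where "A = Lt (SS t) t \<times> ((SS t - {[]}) \<times> SS t)"
  have inj: "inj_on hR A" unfolding hR_def by (auto simp: inj_on_def)
  define w2 where "w2 = (\<lambda>(c :: nat list, e :: nat list). length c + length e)"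
  define w3 where "w3 = (\<lambda>(a, b). wl a + w2 b)"
  have wc: "(wt \<circ> hR) p = 1 + w3 p" for p
    by (cases p) (auto simp: wt_def hR_def w3_def w2_def wl_def)
  have l1: "lfin (SS t - {[]}) length" by (rule lfin_subset[OF lfin_SS]) auto
  have l2: "lfin ((SS t - {[]}) \<times> SS t) w2" unfolding w2_def by (rule lfin_pair[OF l1 lfin_SS])
  have lL: "lfin (Lt (SS t) t) wl" using W_Lt[OF lfin_SS] by blast
  have l3: "lfin A w3" unfolding A_def w3_def by (rule lfin_pair[OF lL l2])
  have "W (RR t) wt = W A (wt \<circ> hR)" unfolding RR_def A_def[symmetric] by (rule W_image[OF inj])
  also have "\<dots> = W A (\<lambda>p. 1 + w3 p)" by (rule W_cong) (simp only: wc)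
  also have "\<dots> = fps_X * W A w3" using W_shift[of A 1 w3] by simp
  also have "W A w3 = W (Lt (SS t) t) wl * W ((SS t - {[]}) \<times> SS t) w2"
    unfolding A_def w3_def by (rule W_pair[OF lL l2])
  also have "W ((SS t - {[]}) \<times> SS t) w2 = W (SS t - {[]}) length * W (SS t) length"
    unfolding w2_def by (rule W_pair[OF l1 lfin_SS])
  finally have 1: "W (RR t) wt = fps_X * (W (Lt (SS t) t) wl * (W (SS t - {[]}) length * W (SS t) length))" .
  have "lfin A (wt \<circ> hR)" by (rule lfin_cong[OF _ lfin_shift[OF l3, of 1]]) (simp only: wc)
  then have "lfin (RR t) wt" unfolding RR_def A_def[symmetric] by (rule lfin_image[OF inj])
  with 1 show ?thesis by blast
qed

lemma build_image: assumes "1 \<le> t" shows "build ` TT t = SS t - {[]}"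
proof
  show "build ` TT t \<subseteq> SS t - {[]}"
  proof
    fix p assume "p \<in> build ` TT t"
    then obtain x where "x \<in> TT t" "p = build x" by blast
    then show "p \<in> SS t - {[]}" using build_SS[of x t] by simp
  qed
  show "SS t - {[]} \<subseteq> build ` TT t"
  proof
    fix p assume "p \<in> SS t - {[]}"
    then obtain x where "x \<in> TT t" "build x = p" using decomp[OF assms] by blast
    then show "p \<in> build ` TT t" by blast
  qed
qed

lemma first_eq:
  assumes t: "1 \<le> t"
  defines "f \<equiv> f_gf t"
  shows "f = 1 + fps_X * f + (f - 1) * (\<Sum>u = 1..t. fps_X ^ u * f ^ u)"
proof -
  have "W (SS t - {[]}) length = W (build ` TT t) length" using build_image[OF t] by simp
  also have "\<dots> = W (TT t) (length \<circ> build)" by (rule W_image[OF build_inj])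
  also have "\<dots> = W (TT t) wt" by (rule W_cong) (simp add: build_len wt_def)
  also have "\<dots> = W (P1 t) wt + W (RR t) wt"
    unfolding TT_eq[OF t] using W_union(1)[OF P1_RR_disj] W_P1 W_RR by blast
  finally have e: "f - 1 = fps_X * f + fps_X * ((\<Sum>j<t. (fps_X * f) ^ j) * ((f - 1) * f))"
    using W_P1 W_RR W_Lt[OF lfin_SS] W_minus unfolding f_def f_W by simp
  have "(\<Sum>u = 1..t. fps_X ^ u * f ^ u) = (\<Sum>u = 1..t. (fps_X * f) ^ u)" by (simp add: power_mult_distrib)
  also have "\<dots> = fps_X * f * (\<Sum>j<t. (fps_X * f) ^ j)" by (rule sum_shift_pow)
  finally have s: "(\<Sum>u = 1..t. fps_X ^ u * f ^ u) = fps_X * f * (\<Sum>j<t. (fps_X * f) ^ j)" .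
  have "f = 1 + fps_X * f + fps_X * ((\<Sum>j<t. (fps_X * f) ^ j) * ((f - 1) * f))"
    using e by (simp add: algebra_simps)
  also have "\<dots> = 1 + fps_X * f + (f - 1) * (fps_X * f * (\<Sum>j<t. (fps_X * f) ^ j))"
    by (simp add: algebra_simps)
  finally show ?thesis unfolding s .
qed

theorem mainTheorem6:
  fixes t :: nat
  assumes "t \<ge> 1"
  defines "f \<equiv> f_gf t" and "g \<equiv> fps_X * f_gf t"
  shows "(f = 1 + fps_X * f + (f - 1) * (\<Sum>u = 1..t. fps_X ^ u * f ^ u)) \<and>
    (g ^ (t + 1) + (1 - fps_X) * (\<Sum>i = 2..t. g ^ i) - g + fps_X = 0) \<and>
    (fps_X * (- (g ^ (t + 1)) + g ^ 2 + g - 1) + (g ^ (t + 2) - 2 * g ^ 2 + g) = 0)"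
proof -
  have E: "f = 1 + fps_X * f + (f - 1) * (\<Sum>u = 1..t. fps_X ^ u * f ^ u)"
    unfolding f_def by (rule first_eq[OF assms(1)])
  have g: "g = fps_X * f" unfolding g_def f_def ..
  show ?thesis using E alg_all[OF assms(1) E] unfolding g by blast
qed

end
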